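(* Let $\Lambda=K\mathcal{Q}/I$ be a finite-dimensional algebra over a field $K$ as in the context, let $A\geqslant1$ and let $\tilde{\Lambda}=\tilde{\Lambda}_A$ be its stretched algebra, $\varepsilon=\sum_{u\in\mathcal{Q}_0}u\in\tilde{\Lambda}$ and $B=\varepsilon\tilde{\Lambda}\varepsilon$. Let $w$ be a vertex of $\tilde{\mathcal{Q}}_A$ not in $\mathcal{Q}_0$, and let $v=\mathfrak{o}(\tilde{p}_w)$, $v'=\mathfrak{t}(\tilde{q}_w)$. Then: (1) $v'B\cong\tilde{q}_wB$ as right $B$-modules; (2) $v'\tilde{\Lambda}\cong\tilde{q}_w\tilde{\Lambda}$ as right $\tilde{\Lambda}$-modules; (3) $Bv\cong B\tilde{p}_w$ as left $B$-modules; (4) $\tilde{\Lambda}v\cong\tilde{\Lambda}\tilde{p}_w$ as left $\tilde{\Lambda}$-modules.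
   Context: Conventions: $\mathcal{Q}$ is a finite quiver with vertex set $\mathcal{Q}_0$; $\mathfrak{o}(\alpha)$, $\mathfrak{t}(\alpha)$ denote start and end of an arrow or path; paths are written left to right. An element $x\in K\mathcal{Q}$ is uniform if $x=vx=xv'$ for vertices $v,v'$. $\Lambda=K\mathcal{Q}/I$ is finite-dimensional with $I$ an admissible ideal generated by a minimal set $\{g^2_1,\dots,g^2_m\}$ of uniform elements. Stretched algebra: for $A\geqslant1$, the quiver $\tilde{\mathcal{Q}}_A$ has all vertices of $\mathcal{Q}$ plus, for each arrow $\alpha$ of $\mathcal{Q}$, new vertices $w_1,\dots,w_{A-1}$; each arrow $\alpha$ is replaced by arrows $\alpha_1,\dots,\alpha_A$ with $\mathfrak{o}(\alpha_1)=\mathfrak{o}(\alpha)$, $\mathfrak{t}(\alpha_j)=\mathfrak{o}(\alpha_{j+1})=w_j$ ($1\le j\le A-1$), $\mathfrak{t}(\alpha_A)=\mathfrak{t}(\alpha)$, and the only arrows incident with $w_j$ are $\alpha_j,\alpha_{j+1}$. $\theta^*:K\mathcal{Q}\to K\tilde{\mathcal{Q}}_A$ is the algebra homomorphism fixing vertices and sending $\alpha\mapsto\alpha_1\cdots\alpha_A$; $\tilde{I}_A$ is the ideal generated by $\theta^*(g^2_1),\dots,\theta^*(g^2_m)$; $\tilde{\Lambda}_A=K\tilde{\mathcal{Q}}_A/\tilde{I}_A$. For a new vertex $w=w_i$ on the path replacing the arrow $\alpha$, $\tilde{p}_w=\alpha_1\cdots\alpha_i$ and $\tilde{q}_w=\alpha_{i+1}\cdots\alpha_A$,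 viewed in $\tilde{\Lambda}$; thus $\mathfrak{o}(\tilde{p}_w)=\mathfrak{o}(\alpha)$, $\mathfrak{t}(\tilde{q}_w)=\mathfrak{t}(\alpha)$. *)

theory Defs
  imports "HOL-Algebra.QuotRing" "HOL-Algebra.FiniteProduct"
begin

text \<open>A path is a pair (v, as): its start vertex v and its list of arrows, read left
  to right; trivial paths are (v, []).\<close>

definition valid_path :: "'v set \<Rightarrow> 'e set \<Rightarrow> ('e \<Rightarrow> 'v) \<Rightarrow> ('e \<Rightarrow> 'v) \<Rightarrow> 'v \<times> 'e list \<Rightarrow> bool" where
  "valid_path V E s t p \<longleftrightarrow> fst p \<in> V \<and> set (snd p) \<subseteq> E \<and>
     (snd p \<noteq> [] \<longrightarrow> s (hd (snd p)) = fst p) \<and>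
     (\<forall>i. Suc i < length (snd p) \<longrightarrow> t (snd p ! i) = s (snd p ! Suc i))"

definition pend :: "('e \<Rightarrow> 'v) \<Rightarrow> 'v \<times> 'e list \<Rightarrow> 'v" where
  "pend t p = (if snd p = [] then fst p else t (last (snd p)))"

text \<open>The path algebra K Q: finitely supported K-valued functions on paths (coefficient
  vectors w.r.t. the path basis), with concatenation product.\<close>

definition path_alg :: "'v set \<Rightarrow> 'e set \<Rightarrow> ('e \<Rightarrow> 'v) \<Rightarrow> ('e \<Rightarrow> 'v)
    \<Rightarrow> ('v \<times> 'e list \<Rightarrow> 'k::field) ring" where
  "path_alg V E s t =
    \<lparr>carrier = {f. finite {p. f p \<noteq> 0} \<and> (\<forall>p. f p \<noteq> 0 \<longrightarrow> valid_path V E s t p)},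
     monoid.mult = (\<lambda>f g p. \<Sum>k\<in>{0..length (snd p)}.
        f (fst p, take k (snd p)) * g (pend t (fst p, take k (snd p)), drop k (snd p))),
     one = (\<lambda>p. if snd p = [] \<and> fst p \<in> V then 1 else 0),
     zero = (\<lambda>p. 0),
     add = (\<lambda>f g p. f p + g p)\<rparr>"

definition pbasis :: "'p \<Rightarrow> 'p \<Rightarrow> 'k::field" where
  "pbasis p = (\<lambda>q. if q = p then 1 else 0)"

text \<open>Elements of the arrow ideal power R^n: spans of paths of length at least n.\<close>
definition arrow_pow :: "'v set \<Rightarrow> 'e set \<Rightarrow> ('e \<Rightarrow> 'v) \<Rightarrow> ('e \<Rightarrow> 'v) \<Rightarrow> nat
    \<Rightarrow> ('v \<times> 'e list \<Rightarrow> 'k::field) set" where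
  "arrow_pow V E s t n = {f \<in> carrier (path_alg V E s t). \<forall>p. f p \<noteq> 0 \<longrightarrow> n \<le> length (snd p)}"

definition admissible :: "'v set \<Rightarrow> 'e set \<Rightarrow> ('e \<Rightarrow> 'v) \<Rightarrow> ('e \<Rightarrow> 'v)
    \<Rightarrow> ('v \<times> 'e list \<Rightarrow> 'k::field) set \<Rightarrow> bool" where
  "admissible V E s t I \<longleftrightarrow> ideal I (path_alg V E s t) \<and>
     (\<exists>N\<ge>2. arrow_pow V E s t N \<subseteq> I) \<and> I \<subseteq> arrow_pow V E s t 2"

definition uniform :: "'v set \<Rightarrow> 'e set \<Rightarrow> ('e \<Rightarrow> 'v) \<Rightarrow> ('e \<Rightarrow> 'v)
    \<Rightarrow> ('v \<times> 'e list \<Rightarrow> 'k::field) \<Rightarrow> bool" where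
  "uniform V E s t x \<longleftrightarrow> x \<in> carrier (path_alg V E s t) \<and>
     (\<exists>v\<in>V. \<exists>v'\<in>V. x = monoid.mult (path_alg V E s t) (pbasis (v, [])) x \<and>
                     x = monoid.mult (path_alg V E s t) x (pbasis (v', [])))"

datatype ('v, 'a) svert = Old 'v | New 'a nat

definition sV :: "nat \<Rightarrow> 'v set \<Rightarrow> 'a set \<Rightarrow> ('v, 'a) svert set" where
  "sV A V E = Old ` V \<union> {New \<alpha> j | \<alpha> j. \<alpha> \<in> E \<and> 1 \<le> j \<and> j \<le> A - 1}"

definition sE :: "nat \<Rightarrow> 'a set \<Rightarrow> ('a \<times> nat) set" where
  "sE A E = {(\<alpha>, j) | \<alpha> j. \<alpha> \<in> E \<and> 1 \<le> j \<and> j \<le> A}"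

definition ss :: "nat \<Rightarrow> ('a \<Rightarrow> 'v) \<Rightarrow> 'a \<times> nat \<Rightarrow> ('v, 'a) svert" where
  "ss A s e = (if snd e = 1 then Old (s (fst e)) else New (fst e) (snd e - 1))"

definition st :: "nat \<Rightarrow> ('a \<Rightarrow> 'v) \<Rightarrow> 'a \<times> nat \<Rightarrow> ('v, 'a) svert" where
  "st A t e = (if snd e = A then Old (t (fst e)) else New (fst e) (snd e))"

definition stretch_path :: "nat \<Rightarrow> 'v \<times> 'a list \<Rightarrow> ('v, 'a) svert \<times> ('a \<times> nat) list" where
  "stretch_path A p = (Old (fst p), concat (map (\<lambda>\<alpha>. map (\<lambda>j. (\<alpha>, j)) [1..<Suc A]) (snd p)))"

text \<open>theta*: the linear extension of the path map v |-> v, alpha |-> alpha_1 ... alpha_A.\<close>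
definition theta :: "nat \<Rightarrow> ('v \<times> 'a list \<Rightarrow> 'k::field)
    \<Rightarrow> (('v, 'a) svert \<times> ('a \<times> nat) list \<Rightarrow> 'k)" where
  "theta A f = (\<lambda>q. \<Sum>p\<in>{p. f p \<noteq> 0 \<and> stretch_path A p = q}. f p)"

definition sR :: "nat \<Rightarrow> 'v set \<Rightarrow> 'a set \<Rightarrow> ('a \<Rightarrow> 'v) \<Rightarrow> ('a \<Rightarrow> 'v)
    \<Rightarrow> (('v, 'a) svert \<times> ('a \<times> nat) list \<Rightarrow> 'k::field) ring" where
  "sR A V E s t = path_alg (sV A V E) (sE A E) (ss A s) (st A t)"

definition sI :: "nat \<Rightarrow> 'v set \<Rightarrow> 'a set \<Rightarrow> ('a \<Rightarrow> 'v) \<Rightarrow> ('a \<Rightarrow> 'v)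
    \<Rightarrow> ('v \<times> 'a list \<Rightarrow> 'k::field) set
    \<Rightarrow> (('v, 'a) svert \<times> ('a \<times> nat) list \<Rightarrow> 'k) set" where
  "sI A V E s t G = genideal (sR A V E s t) (theta A ` G)"

definition sLam :: "nat \<Rightarrow> 'v set \<Rightarrow> 'a set \<Rightarrow> ('a \<Rightarrow> 'v) \<Rightarrow> ('a \<Rightarrow> 'v)
    \<Rightarrow> ('v \<times> 'a list \<Rightarrow> 'k::field) set
    \<Rightarrow> (('v, 'a) svert \<times> ('a \<times> nat) list \<Rightarrow> 'k) set ring" where
  "sLam A V E s t G = sR A V E s t Quot sI A V E s t G"

definition scls :: "nat \<Rightarrow> 'v set \<Rightarrow> 'a set \<Rightarrow> ('a \<Rightarrow> 'v) \<Rightarrow> ('a \<Rightarrow> 'v)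
    \<Rightarrow> ('v \<times> 'a list \<Rightarrow> 'k::field) set
    \<Rightarrow> ('v, 'a) svert \<times> ('a \<times> nat) list
    \<Rightarrow> (('v, 'a) svert \<times> ('a \<times> nat) list \<Rightarrow> 'k) set" where
  "scls A V E s t G p = a_r_coset (sR A V E s t) (sI A V E s t G) (pbasis p)"

text \<open>For a new vertex w = w_i on the path replacing alpha: the paths p~_w = alpha_1...alpha_i
  and q~_w = alpha_(i+1)...alpha_A (only used for new vertices).\<close>
definition pw_path :: "nat \<Rightarrow> ('a \<Rightarrow> 'v) \<Rightarrow> ('v, 'a) svert \<Rightarrow> ('v, 'a) svert \<times> ('a \<times> nat) list" where
  "pw_path A s w = (case w of New \<alpha> i \<Rightarrow> (Old (s \<alpha>), map (\<lambda>j. (\<alpha>, j)) [1..<Suc i])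
                             | Old v \<Rightarrow> (Old v, []))"

definition qw_path :: "nat \<Rightarrow> ('v, 'a) svert \<Rightarrow> ('v, 'a) svert \<times> ('a \<times> nat) list" where
  "qw_path A w = (case w of New \<alpha> i \<Rightarrow> (New \<alpha> i, map (\<lambda>j. (\<alpha>, j)) [Suc i..<Suc A])
                          | Old v \<Rightarrow> (Old v, []))"

text \<open>M and N are subsets of the ring R on which S (a subset of R) acts by right
  (resp. left) multiplication; an isomorphism is an additive bijection commuting with
  the action.\<close>
definition right_mod_iso :: "('r, 'm) ring_scheme \<Rightarrow> 'r set \<Rightarrow> 'r set \<Rightarrow> 'r set \<Rightarrow> bool" where
  "right_mod_iso R S M N \<longleftrightarrow> (\<exists>\<phi>. bij_betw \<phi> M N \<and>
     (\<forall>x\<in>M. \<forall>y\<in>M. \<phi> (add R x y) = add R (\<phi> x) (\<phi> y)) \<and>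
     (\<forall>x\<in>M. \<forall>b\<in>S. \<phi> (monoid.mult R x b) = monoid.mult R (\<phi> x) b))"

definition left_mod_iso :: "('r, 'm) ring_scheme \<Rightarrow> 'r set \<Rightarrow> 'r set \<Rightarrow> 'r set \<Rightarrow> bool" where
  "left_mod_iso R S M N \<longleftrightarrow> (\<exists>\<phi>. bij_betw \<phi> M N \<and>
     (\<forall>x\<in>M. \<forall>y\<in>M. \<phi> (add R x y) = add R (\<phi> x) (\<phi> y)) \<and>
     (\<forall>x\<in>M. \<forall>b\<in>S. \<phi> (monoid.mult R b x) = monoid.mult R b (\<phi> x)))"

end

theory Submission
  imports Defs
begin


locale quiv =
  fixes V :: "'v set" and E :: "'e set" and s t :: "'e \<Rightarrow> 'v"
  assumes finV: "finite V" and tE: "t ` E \<subseteq> V"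
begin

abbreviation vp where "vp \<equiv> valid_path V E s t"

lemma vp_Nil[simp]: "vp (v, []) \<longleftrightarrow> v \<in> V"
  by (simp add: valid_path_def)

lemma vp_Cons: "vp (v, e # es) \<longleftrightarrow> v \<in> V \<and> e \<in> E \<and> s e = v \<and> vp (t e, es)"
proof -
  have "(\<forall>i. Suc i < length (e#es) \<longrightarrow> t ((e#es) ! i) = s ((e#es) ! Suc i)) \<longleftrightarrow>
        (es \<noteq> [] \<longrightarrow> t e = s (hd es)) \<and> (\<forall>i. Suc i < length es \<longrightarrow> t (es ! i) = s (es ! Suc i))"
    (is "?L \<longleftrightarrow> ?R")
  proof
    assume ?L then show ?R
      by (auto simp: hd_conv_nth)
  next
    assume r: ?R
    show ?L
    proof (intro allI impI)
      fix i assume "Suc i < length (e#es)"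
      then show "t ((e#es) ! i) = s ((e#es) ! Suc i)"
        using r by (cases i) (auto simp: hd_conv_nth)
    qed
  qed
  moreover have "e \<in> E \<Longrightarrow> t e \<in> V" using tE by auto
  ultimately show ?thesis by (auto simp: valid_path_def)
qed

lemma pend_Nil[simp]: "pend t (v, []) = v" by (simp add: pend_def)
lemma pend_Cons[simp]: "pend t (v, e # es) = pend t (t e, es)" by (simp add: pend_def)
lemma pend_append: "pend t (v, xs @ ys) = pend t (pend t (v, xs), ys)"
  by (induction xs arbitrary: v) auto

lemma vp_append: "vp (v, xs @ ys) \<longleftrightarrow> vp (v, xs) \<and> vp (pend t (v, xs), ys)"
proof (induction xs arbitrary: v)
  case Nil
  then show ?case by (cases ys) (auto simp: vp_Cons)
next
  case (Cons a xs)
  then show ?case by (auto simp: vp_Cons)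
qed

lemma vp_fst: "vp p \<Longrightarrow> fst p \<in> V" by (simp add: valid_path_def)

lemma vp_pend: "vp (v, xs) \<Longrightarrow> pend t (v, xs) \<in> V"
  by (induction xs arbitrary: v) (auto simp: vp_Cons)

abbreviation P where "P \<equiv> path_alg V E s t"

lemma carrier_P: "f \<in> carrier P \<longleftrightarrow> finite {p. f p \<noteq> 0} \<and> (\<forall>p. f p \<noteq> 0 \<longrightarrow> vp p)"
  by (simp add: path_alg_def)

lemma mult_P: "f \<otimes>\<^bsub>P\<^esub> g = (\<lambda>p. \<Sum>k\<in>{0..length (snd p)}.
        f (fst p, take k (snd p)) * g (pend t (fst p, take k (snd p)), drop k (snd p)))"
  by (simp add: path_alg_def)

lemma add_P: "f \<oplus>\<^bsub>P\<^esub> g = (\<lambda>p. f p + g p)" by (simp add: path_alg_def)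
lemma zero_P: "\<zero>\<^bsub>P\<^esub> = (\<lambda>p. 0)" by (simp add: path_alg_def)
lemma one_P: "\<one>\<^bsub>P\<^esub> = (\<lambda>p. if snd p = [] \<and> fst p \<in> V then 1 else 0)" by (simp add: path_alg_def)

lemma assoc_P:
  fixes x y z :: "'v \<times> 'e list \<Rightarrow> 'k::field"
  shows "(x \<otimes>\<^bsub>P\<^esub> y) \<otimes>\<^bsub>P\<^esub> z = x \<otimes>\<^bsub>P\<^esub> (y \<otimes>\<^bsub>P\<^esub> z)"
proof
  fix p :: "'v \<times> 'e list"
  obtain v xs where p: "p = (v, xs)" by (cases p)
  define n where "n = length xs"
  define G where "G i j = x (v, take i xs) * y (pend t (v, take i xs), take j (drop i xs)) *
      z (pend t (v, take (i+j) xs), drop (i+j) xs)" for i j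
  have "((x \<otimes>\<^bsub>P\<^esub> y) \<otimes>\<^bsub>P\<^esub> z) p = (\<Sum>k\<in>{0..n}. (\<Sum>i\<in>{0..k}. x (v, take i xs) *
        y (pend t (v, take i xs), take (k-i) (drop i xs))) * z (pend t (v, take k xs), drop k xs))"
    unfolding mult_P p n_def fst_conv snd_conv
    by (intro sum.cong refl) (simp add: drop_take min_absorb1 min_absorb2)
  also have "\<dots> = (\<Sum>k\<le>n. \<Sum>i\<le>k. G i (k - i))"
    unfolding G_def atLeast0AtMost sum_distrib_right
    by (intro sum.cong refl) simp
  also have "\<dots> = (\<Sum>(i,j)\<in>{(i,j). i+j \<le> n}. G i j)"
    by (rule sum.triangle_reindex_eq[symmetric])
  also have "\<dots> = (\<Sum>(i,j)\<in>Sigma {..n} (\<lambda>i. {..n-i}). G i j)"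
    by (intro sum.cong refl) auto
  also have "\<dots> = (\<Sum>i\<le>n. \<Sum>j\<le>n-i. G i j)"
    by (rule sum.Sigma[symmetric]) auto
  also have "\<dots> = (x \<otimes>\<^bsub>P\<^esub> (y \<otimes>\<^bsub>P\<^esub> z)) p"
    unfolding mult_P p n_def G_def atLeast0AtMost sum_distrib_left fst_conv snd_conv
    by (intro sum.cong refl) (simp_all add: pend_append[symmetric] take_add[symmetric] mult.assoc add.commute)
  finally show "((x \<otimes>\<^bsub>P\<^esub> y) \<otimes>\<^bsub>P\<^esub> z) p = (x \<otimes>\<^bsub>P\<^esub> (y \<otimes>\<^bsub>P\<^esub> z)) p" .
qed

lemma mult_P_nonzero:
  fixes f g :: "'v \<times> 'e list \<Rightarrow> 'k::field"
  assumes "(f \<otimes>\<^bsub>P\<^esub> g) p \<noteq> 0"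
  obtains k where "f (fst p, take k (snd p)) \<noteq> 0" "g (pend t (fst p, take k (snd p)), drop k (snd p)) \<noteq> 0"
proof -
  from assms have "(\<Sum>k\<in>{0..length (snd p)}.
        f (fst p, take k (snd p)) * g (pend t (fst p, take k (snd p)), drop k (snd p))) \<noteq> 0"
    unfolding mult_P by simp
  then obtain k where "f (fst p, take k (snd p)) * g (pend t (fst p, take k (snd p)), drop k (snd p)) \<noteq> 0"
    by (meson sum.not_neutral_contains_not_neutral)
  then have a: "f (fst p, take k (snd p)) \<noteq> 0" and b: "g (pend t (fst p, take k (snd p)), drop k (snd p)) \<noteq> 0" by simp_all
  show ?thesis by (rule that[OF a b])
qed

lemma supp_mult_P:
  fixes f g :: "'v \<times> 'e list \<Rightarrow> 'k::field"
  shows "{p. (f \<otimes>\<^bsub>P\<^esub> g) p \<noteq> 0} \<subseteq>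
     (\<lambda>(a, b). (fst a, snd a @ snd b)) ` ({p. f p \<noteq> 0} \<times> {p. g p \<noteq> 0})"
proof
  fix p assume "p \<in> {p. (f \<otimes>\<^bsub>P\<^esub> g) p \<noteq> 0}"
  then obtain k where k: "f (fst p, take k (snd p)) \<noteq> 0" "g (pend t (fst p, take k (snd p)), drop k (snd p)) \<noteq> 0"
    using mult_P_nonzero by blast
  have "p = (\<lambda>(a, b). (fst a, snd a @ snd b)) ((fst p, take k (snd p)), (pend t (fst p, take k (snd p)), drop k (snd p)))"
    by simp
  moreover have "((fst p, take k (snd p)), (pend t (fst p, take k (snd p)), drop k (snd p))) \<in> {p. f p \<noteq> 0} \<times> {p. g p \<noteq> 0}"
    using k by simp
  ultimately show "p \<in> (\<lambda>(a, b). (fst a, snd a @ snd b)) ` ({p. f p \<noteq> 0} \<times> {p. g p \<noteq> 0})"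
    by (rule image_eqI)
qed

lemma mult_closed_P:
  fixes f g :: "'v \<times> 'e list \<Rightarrow> 'k::field"
  assumes "f \<in> carrier P" "g \<in> carrier P"
  shows "f \<otimes>\<^bsub>P\<^esub> g \<in> carrier P"
  unfolding carrier_P
proof
  have "finite ({p. f p \<noteq> 0} \<times> {p. g p \<noteq> 0})" using assms unfolding carrier_P by blast
  then show "finite {p. (f \<otimes>\<^bsub>P\<^esub> g) p \<noteq> 0}"
    by (rule finite_subset[OF supp_mult_P finite_imageI])
  show "\<forall>p. (f \<otimes>\<^bsub>P\<^esub> g) p \<noteq> 0 \<longrightarrow> vp p"
  proof (intro allI impI)
    fix p assume "(f \<otimes>\<^bsub>P\<^esub> g) p \<noteq> 0"
    then obtain k where k: "f (fst p, take k (snd p)) \<noteq> 0" "g (pend t (fst p, take k (snd p)), drop k (snd p)) \<noteq> 0"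
      using mult_P_nonzero by blast
    then have "vp (fst p, take k (snd p))" "vp (pend t (fst p, take k (snd p)), drop k (snd p))"
      using assms unfolding carrier_P by blast+
    then have "vp (fst p, take k (snd p) @ drop k (snd p))" using vp_append by blast
    then show "vp p" by simp
  qed
qed

lemma one_closed_P: "(\<one>\<^bsub>P\<^esub> :: 'v \<times> 'e list \<Rightarrow> 'k::field) \<in> carrier P"
  unfolding carrier_P one_P
proof
  have "{p. (if snd p = [] \<and> fst p \<in> V then 1 else 0) \<noteq> (0::'k)} \<subseteq> (\<lambda>v. (v, [])) ` V"
  proof
    fix p assume "p \<in> {p. (if snd p = [] \<and> fst p \<in> V then 1 else 0) \<noteq> (0::'k)}"
    then have "snd p = []" "fst p \<in> V" by (auto split: if_splits)
    then show "p \<in> (\<lambda>v. (v, [])) ` V" by (metis image_eqI prod.collapse)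
  qed
  then show "finite {p. (if snd p = [] \<and> fst p \<in> V then 1 else 0) \<noteq> (0::'k)}"
    using finV finite_subset by blast
  show "\<forall>p. (if snd p = [] \<and> fst p \<in> V then 1 else 0) \<noteq> (0::'k) \<longrightarrow> vp p"
    by (simp add: valid_path_def)
qed

lemma l_one_P:
  fixes f :: "'v \<times> 'e list \<Rightarrow> 'k::field"
  assumes "f \<in> carrier P" shows "\<one>\<^bsub>P\<^esub> \<otimes>\<^bsub>P\<^esub> f = f"
proof
  fix p :: "'v \<times> 'e list"
  obtain v xs where p: "p = (v, xs)" by (cases p)
  have "(\<one>\<^bsub>P\<^esub> \<otimes>\<^bsub>P\<^esub> f) p = (\<Sum>k\<in>{0..length xs}. if k = 0 then (if v \<in> V then f (v, xs) else 0) else 0)"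
    unfolding mult_P one_P p fst_conv snd_conv
  proof (rule sum.cong[OF refl])
    fix k assume k: "k \<in> {0..length xs}"
    show "(if take k xs = [] \<and> v \<in> V then 1 else 0) * f (pend t (v, take k xs), drop k xs) =
          (if k = 0 then (if v \<in> V then f (v, xs) else 0) else 0)"
    proof (cases "k = 0")
      case False
      then have "take k xs \<noteq> []" using k by (cases xs) auto
      then show ?thesis using False by simp
    qed simp
  qed
  also have "\<dots> = (if v \<in> V then f (v, xs) else 0)" by (simp add: sum.delta)
  also have "\<dots> = f p"
  proof (cases "v \<in> V")
    case False
    then have "\<not> vp (v, xs)" using vp_fst by fastforce
    then show ?thesis using assms False unfolding carrier_P p by (simp del: prod.collapse) metis
  qed (simp add: p)
  finally show "(\<one>\<^bsub>P\<^esub> \<otimes>\<^bsub>P\<^esub> f) p = f p" .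
qed

lemma r_one_P:
  fixes f :: "'v \<times> 'e list \<Rightarrow> 'k::field"
  assumes "f \<in> carrier P" shows "f \<otimes>\<^bsub>P\<^esub> \<one>\<^bsub>P\<^esub> = f"
proof
  fix p :: "'v \<times> 'e list"
  obtain v xs where p: "p = (v, xs)" by (cases p)
  have "(f \<otimes>\<^bsub>P\<^esub> \<one>\<^bsub>P\<^esub>) p = (\<Sum>k\<in>{0..length xs}. if k = length xs then (if pend t (v, xs) \<in> V then f (v, xs) else 0) else 0)"
    unfolding mult_P one_P p fst_conv snd_conv
  proof (rule sum.cong[OF refl])
    fix k assume k: "k \<in> {0..length xs}"
    show "f (v, take k xs) * (if drop k xs = [] \<and> pend t (v, take k xs) \<in> V then 1 else 0) =
          (if k = length xs then (if pend t (v, xs) \<in> V then f (v, xs) else 0) else 0)"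
    proof (cases "k = length xs")
      case False
      then have "drop k xs \<noteq> []" using k by simp
      then show ?thesis using False by simp
    qed simp
  qed
  also have "\<dots> = (if pend t (v, xs) \<in> V then f (v, xs) else 0)" by (simp add: sum.delta')
  also have "\<dots> = f p"
  proof (cases "pend t (v, xs) \<in> V")
    case False
    then have "\<not> vp (v, xs)" using vp_pend by blast
    then show ?thesis using assms False unfolding carrier_P p by (simp del: prod.collapse) metis
  qed (simp add: p)
  finally show "(f \<otimes>\<^bsub>P\<^esub> \<one>\<^bsub>P\<^esub>) p = f p" .
qed

lemma add_closed_P:
  fixes f g :: "'v \<times> 'e list \<Rightarrow> 'k::field"
  assumes "f \<in> carrier P" "g \<in> carrier P" shows "f \<oplus>\<^bsub>P\<^esub> g \<in> carrier P"
  unfolding carrier_P add_P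
proof
  have "{p. f p + g p \<noteq> 0} \<subseteq> {p. f p \<noteq> 0} \<union> {p. g p \<noteq> 0}" by auto
  moreover have "finite ({p. f p \<noteq> 0} \<union> {p. g p \<noteq> 0})" using assms unfolding carrier_P by blast
  ultimately show "finite {p. f p + g p \<noteq> 0}" by (rule finite_subset)
  show "\<forall>p. f p + g p \<noteq> 0 \<longrightarrow> vp p"
  proof (intro allI impI)
    fix p assume "f p + g p \<noteq> 0"
    then have "f p \<noteq> 0 \<or> g p \<noteq> 0" by auto
    then show "vp p" using assms unfolding carrier_P by blast
  qed
qed

lemma zero_closed_P: "(\<zero>\<^bsub>P\<^esub> :: 'v \<times> 'e list \<Rightarrow> 'k::field) \<in> carrier P" by (simp add: carrier_P zero_P)

lemma neg_closed_P: "(f :: 'v \<times> 'e list \<Rightarrow> 'k::field) \<in> carrier P \<Longrightarrow> (\<lambda>p. - f p) \<in> carrier P"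
  by (simp add: carrier_P)

lemma ring_P: "ring (P :: ('v \<times> 'e list \<Rightarrow> 'k::field) ring)"
proof (rule ringI)
  show "abelian_group (P :: ('v \<times> 'e list \<Rightarrow> 'k::field) ring)"
  proof (rule abelian_groupI)
    fix x :: "'v \<times> 'e list \<Rightarrow> 'k::field" assume x: "x \<in> carrier P"
    show "\<exists>y\<in>carrier P. y \<oplus>\<^bsub>P\<^esub> x = \<zero>\<^bsub>P\<^esub>"
      by (intro bexI[OF _ neg_closed_P[OF x]]) (simp add: add_P zero_P)
  next
    fix x y z :: "'v \<times> 'e list \<Rightarrow> 'k::field"
    show "x \<oplus>\<^bsub>P\<^esub> y \<oplus>\<^bsub>P\<^esub> z = x \<oplus>\<^bsub>P\<^esub> (y \<oplus>\<^bsub>P\<^esub> z)" by (simp add: add_P add.assoc)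
    show "x \<oplus>\<^bsub>P\<^esub> y = y \<oplus>\<^bsub>P\<^esub> x" by (simp add: add_P add.commute)
    show "\<zero>\<^bsub>P\<^esub> \<oplus>\<^bsub>P\<^esub> x = x" by (simp add: add_P zero_P)
  qed (simp_all add: add_closed_P zero_closed_P)
  show "monoid (P :: ('v \<times> 'e list \<Rightarrow> 'k::field) ring)"
    by (rule monoidI) (simp_all add: mult_closed_P one_closed_P l_one_P r_one_P assoc_P)
next
  fix x y z :: "'v \<times> 'e list \<Rightarrow> 'k::field"
  show "(x \<oplus>\<^bsub>P\<^esub> y) \<otimes>\<^bsub>P\<^esub> z = x \<otimes>\<^bsub>P\<^esub> z \<oplus>\<^bsub>P\<^esub> y \<otimes>\<^bsub>P\<^esub> z"
    unfolding mult_P add_P by (simp add: sum.distrib[symmetric] distrib_right)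
  show "z \<otimes>\<^bsub>P\<^esub> (x \<oplus>\<^bsub>P\<^esub> y) = z \<otimes>\<^bsub>P\<^esub> x \<oplus>\<^bsub>P\<^esub> z \<otimes>\<^bsub>P\<^esub> y"
    unfolding mult_P add_P by (simp add: sum.distrib[symmetric] distrib_left)
qed

lemma a_inv_P:
  fixes f :: "'v \<times> 'e list \<Rightarrow> 'k::field"
  assumes "f \<in> carrier P" shows "\<ominus>\<^bsub>P\<^esub> f = (\<lambda>p. - f p)"
proof -
  interpret ring P by (rule ring_P)
  have "(\<lambda>p. - f p) \<oplus>\<^bsub>P\<^esub> f = \<zero>\<^bsub>P\<^esub>" by (simp add: add_P zero_P)
  then show ?thesis using minus_equality[OF _ assms neg_closed_P[OF assms]] by simp
qed

lemma pbasis_carrier: "vp p \<Longrightarrow> (pbasis p :: 'v \<times> 'e list \<Rightarrow> 'k::field) \<in> carrier P"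
proof -
  assume "vp p"
  have "{q. (pbasis p q :: 'k) \<noteq> 0} = {p}" by (auto simp: pbasis_def)
  with \<open>vp p\<close> show ?thesis unfolding carrier_P by (auto simp: pbasis_def)
qed

lemma mult_pbasis_right:
  fixes f :: "'v \<times> 'e list \<Rightarrow> 'k::field"
  shows "f \<otimes>\<^bsub>P\<^esub> pbasis (u, []) = (\<lambda>p. if pend t p = u then f p else 0)"
proof
  fix p :: "'v \<times> 'e list"
  obtain v xs where p: "p = (v, xs)" by (cases p)
  have "(f \<otimes>\<^bsub>P\<^esub> pbasis (u, [])) p = (\<Sum>k\<in>{0..length xs}. if k = length xs then (if pend t (v, xs) = u then f (v, xs) else 0) else 0)"
    unfolding mult_P pbasis_def p fst_conv snd_conv
  proof (rule sum.cong[OF refl])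
    fix k assume k: "k \<in> {0..length xs}"
    show "f (v, take k xs) * (if (pend t (v, take k xs), drop k xs) = (u, []) then 1 else 0) =
          (if k = length xs then (if pend t (v, xs) = u then f (v, xs) else 0) else 0)"
    proof (cases "k = length xs")
      case False
      then have "drop k xs \<noteq> []" using k by simp
      then show ?thesis using False by simp
    qed simp
  qed
  also have "\<dots> = (if pend t p = u then f p else 0)" unfolding p by simp
  finally show "(f \<otimes>\<^bsub>P\<^esub> pbasis (u, [])) p = (if pend t p = u then f p else 0)" .
qed

lemma mult_pbasis_left:
  fixes f :: "'v \<times> 'e list \<Rightarrow> 'k::field"
  shows "pbasis (u, []) \<otimes>\<^bsub>P\<^esub> f = (\<lambda>p. if fst p = u then f p else 0)"
proof
  fix p :: "'v \<times> 'e list"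
  obtain v xs where p: "p = (v, xs)" by (cases p)
  have "(pbasis (u, []) \<otimes>\<^bsub>P\<^esub> f) p = (\<Sum>k\<in>{0..length xs}. if k = 0 then (if v = u then f (v, xs) else 0) else 0)"
    unfolding mult_P pbasis_def p fst_conv snd_conv
  proof (rule sum.cong[OF refl])
    fix k assume k: "k \<in> {0..length xs}"
    show "(if (v, take k xs) = (u, []) then 1 else 0) * f (pend t (v, take k xs), drop k xs) =
          (if k = 0 then (if v = u then f (v, xs) else 0) else 0)"
    proof (cases "k = 0")
      case False
      then have "take k xs \<noteq> []" using k by (cases xs) auto
      then show ?thesis using False by simp
    qed simp
  qed
  also have "\<dots> = (if fst p = u then f p else 0)" unfolding p by simp
  finally show "(pbasis (u, []) \<otimes>\<^bsub>P\<^esub> f) p = (if fst p = u then f p else 0)" .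
qed

lemma ideal_scalar:
  fixes f :: "'v \<times> 'e list \<Rightarrow> 'k::field"
  assumes K: "ideal K P" and f: "f \<in> K"
  shows "(\<lambda>p. c * f p) \<in> K"
proof -
  have fc: "f \<in> carrier P" by (rule ideal.Icarr[OF K f])
  define co :: "'v \<times> 'e list \<Rightarrow> 'k" where "co = (\<lambda>p. c * (\<one>\<^bsub>P\<^esub>) p)"
  have "co \<in> carrier P"
  proof -
    have o: "(\<one>\<^bsub>P\<^esub> :: 'v \<times> 'e list \<Rightarrow> 'k) \<in> carrier P" by (rule one_closed_P)
    have sub: "{p. co p \<noteq> 0} \<subseteq> {p. (\<one>\<^bsub>P\<^esub> :: 'v \<times> 'e list \<Rightarrow> 'k) p \<noteq> 0}" unfolding co_def by auto
    have o2: "finite {p. (\<one>\<^bsub>P\<^esub> :: 'v \<times> 'e list \<Rightarrow> 'k) p \<noteq> 0}"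
      and o3: "\<forall>p. (\<one>\<^bsub>P\<^esub> :: 'v \<times> 'e list \<Rightarrow> 'k) p \<noteq> 0 \<longrightarrow> vp p"
      using o unfolding carrier_P by auto
    have "finite {p. co p \<noteq> 0}" by (rule finite_subset[OF sub o2])
    moreover have "\<forall>p. co p \<noteq> 0 \<longrightarrow> vp p" using o3 sub by auto
    ultimately show ?thesis unfolding carrier_P by (rule conjI)
  qed
  moreover have "co \<otimes>\<^bsub>P\<^esub> f = (\<lambda>p. c * (\<one>\<^bsub>P\<^esub> \<otimes>\<^bsub>P\<^esub> f) p)"
    unfolding co_def mult_P by (rule ext) (simp only: sum_distrib_left mult.assoc)
  ultimately have "(\<lambda>p. c * (\<one>\<^bsub>P\<^esub> \<otimes>\<^bsub>P\<^esub> f) p) \<in> K" using ideal.I_l_closed[OF K f] by metis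
  then show ?thesis unfolding l_one_P[OF fc] .
qed

lemma ideal_lincomb:
  fixes X :: "'i \<Rightarrow> 'v \<times> 'e list \<Rightarrow> 'k::field"
  assumes K: "ideal K P" and S: "finite S" and X: "\<And>l. l \<in> S \<Longrightarrow> X l \<in> K"
  shows "(\<lambda>p. \<Sum>l\<in>S. c l * X l p) \<in> K"
  using S X
proof (induction S rule: finite_induct)
  case empty
  have "\<zero>\<^bsub>P\<^esub> \<in> K" by (rule additive_subgroup.zero_closed[OF ideal.axioms(1)[OF K]])
  then show ?case by (simp add: zero_P)
next
  case (insert a F)
  have 1: "(\<lambda>p. c a * X a p) \<in> K" by (rule ideal_scalar[OF K insert.prems]) simp
  have 2: "(\<lambda>p. \<Sum>l\<in>F. c l * X l p) \<in> K" by (rule insert.IH) (simp add: insert.prems)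
  have "(\<lambda>p. c a * X a p) \<oplus>\<^bsub>P\<^esub> (\<lambda>p. \<Sum>l\<in>F. c l * X l p) \<in> K"
    by (rule additive_subgroup.a_closed[OF ideal.axioms(1)[OF K] 1 2])
  then show ?case using insert.hyps by (simp add: add_P)
qed

end


definition schain :: "'a \<Rightarrow> nat \<Rightarrow> nat \<Rightarrow> ('a \<times> nat) list" where
  "schain \<alpha> i k = map (\<lambda>l. (\<alpha>, l)) [Suc i..<Suc k]"

lemma length_chain[simp]: "length (schain \<alpha> i k) = k - i"
  by (simp add: schain_def del: upt_Suc)

lemma take_chain: "l \<le> k - i \<Longrightarrow> take l (schain \<alpha> i k) = schain \<alpha> i (i + l)"
proof -
  assume a: "l \<le> k - i"
  show ?thesis
  proof (cases "l = 0")
    case False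
  then have "take l [Suc i..<Suc k] = [Suc i..<Suc i + l]" using a by (intro take_upt) simp
  then show ?thesis by (simp add: schain_def take_map del: upt_Suc)
  qed (simp add: schain_def)
qed

lemma drop_chain: "drop l (schain \<alpha> i k) = schain \<alpha> (i + l) k"
  by (simp add: schain_def drop_map del: upt_Suc)

lemma chain_append: "i \<le> k \<Longrightarrow> k \<le> m \<Longrightarrow> schain \<alpha> i k @ schain \<alpha> k m = schain \<alpha> i m"
  unfolding schain_def map_append[symmetric]
  by (metis Suc_le_mono le_add_diff_inverse upt_add_eq_append)

lemma chain_empty[simp]: "schain \<alpha> i i = []" by (simp add: schain_def)

lemma chain_Nil_iff: "schain \<alpha> i k = [] \<longleftrightarrow> k \<le> i" by (simp add: schain_def)

lemma last_chain: "i < k \<Longrightarrow> last (schain \<alpha> i k) = (\<alpha>, k)"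
  by (simp add: schain_def last_map)

lemma chain_snoc: "i \<le> k \<Longrightarrow> schain \<alpha> i (Suc k) = schain \<alpha> i k @ [(\<alpha>, Suc k)]"
  by (simp add: schain_def)

locale stretch =
  fixes V :: "'v set" and E :: "'a set" and s t :: "'a \<Rightarrow> 'v" and A :: nat
  assumes finV: "finite V" and finE: "finite E" and sE: "s ` E \<subseteq> V" and tE: "t ` E \<subseteq> V"
    and A1: "1 \<le> A"
begin

abbreviation "SV \<equiv> sV A V E"
abbreviation "SE \<equiv> sE A E"
abbreviation "SS \<equiv> ss A s"
abbreviation "ST \<equiv> st A t"

lemma finite_SV: "finite SV"
proof -
  have "{New \<alpha> j | \<alpha> j. \<alpha> \<in> E \<and> 1 \<le> j \<and> j \<le> A - 1} \<subseteq> (\<lambda>(\<alpha>, j). New \<alpha> j) ` (E \<times> {..A})"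
    by auto
  then have "finite {New \<alpha> j | \<alpha> j. \<alpha> \<in> E \<and> 1 \<le> j \<and> j \<le> A - 1}"
    by (rule finite_subset) (simp add: finE)
  then show ?thesis unfolding sV_def using finV by simp
qed

lemma ST_SE: "ST ` SE \<subseteq> SV"
  using tE A1 by (auto simp: st_def sE_def sV_def)

sublocale S: quiv SV SE SS ST
  by unfold_locales (rule finite_SV, rule ST_SE)

sublocale O: quiv V E s t
  by unfold_locales (rule finV, rule tE)

definition start :: "'a \<Rightarrow> nat \<Rightarrow> ('v, 'a) svert" where
  "start \<alpha> i = (if i = 0 then Old (s \<alpha>) else New \<alpha> i)"

lemma ST_simp: "ST (\<alpha>, k) = (if k = A then Old (t \<alpha>) else New \<alpha> k)"
  by (simp add: st_def)

lemma SS_simp: "SS (\<alpha>, Suc i) = start \<alpha> i"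
  by (simp add: ss_def start_def)

lemma pend_chain: "i < k \<Longrightarrow> pend ST (x, schain \<alpha> i k) = ST (\<alpha>, k)"
  by (simp add: pend_def chain_Nil_iff last_chain)

lemma pend_chain_New: "i \<le> k \<Longrightarrow> k < A \<Longrightarrow> 1 \<le> i \<Longrightarrow> pend ST (New \<alpha> i, schain \<alpha> i k) = New \<alpha> k"
  by (cases "i = k") (auto simp: pend_chain ST_simp)

lemma start_SV: "\<alpha> \<in> E \<Longrightarrow> i < A \<Longrightarrow> start \<alpha> i \<in> SV"
  using sE by (auto simp: start_def sV_def)

lemma chain_valid:
  assumes "\<alpha> \<in> E" "i < A" "i \<le> k" "k \<le> A"
  shows "S.vp (start \<alpha> i, schain \<alpha> i k)"
  using assms(3,4)
proof (induction k)
  case 0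
  then show ?case using start_SV[OF assms(1,2)] by simp
next
  case (Suc k)
  show ?case
  proof (cases "i = Suc k")
    case True
    then show ?thesis using start_SV[OF assms(1,2)] by simp
  next
    case False
    then have ik: "i \<le> k" using Suc.prems by simp
    have v1: "S.vp (start \<alpha> i, schain \<alpha> i k)" using Suc ik by simp
    have pe: "pend ST (start \<alpha> i, schain \<alpha> i k) = start \<alpha> k"
    proof (cases "i = k")
      case False
      then have "i < k" using ik by simp
      then show ?thesis using Suc.prems by (simp add: pend_chain ST_simp start_def)
    qed simp
    have "start \<alpha> k \<in> SV" using start_SV[OF assms(1)] Suc.prems by simp
    moreover have "(\<alpha>, Suc k) \<in> SE" using assms(1) Suc.prems by (simp add: sE_def)
    moreover have "ST (\<alpha>, Suc k) \<in> SV" using ST_SE calculation(2) by blast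
    ultimately have v2: "S.vp (start \<alpha> k, [(\<alpha>, Suc k)])" by (simp add: S.vp_Cons SS_simp)
    show ?thesis using v1 v2 pe ik by (simp add: chain_snoc S.vp_append)
  qed
qed

lemma stretch_eq: "stretch_path A p = (Old (fst p), concat (map (\<lambda>\<alpha>. schain \<alpha> 0 A) (snd p)))"
  by (simp add: stretch_path_def schain_def)

lemma stretch_valid: "O.vp (v, as) \<Longrightarrow> S.vp (Old v, concat (map (\<lambda>\<alpha>. schain \<alpha> 0 A) as))"
proof (induction as arbitrary: v)
  case Nil
  then have "v \<in> V" by simp
  then have "Old v \<in> SV" by (simp add: sV_def)
  then show ?case by simp
next
  case (Cons a as)
  then have a: "v \<in> V" "a \<in> E" "s a = v" "O.vp (t a, as)" by (simp_all add: O.vp_Cons)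
  have "S.vp (start a 0, schain a 0 A)" using chain_valid[OF a(2)] A1 by simp
  then have 1: "S.vp (Old v, schain a 0 A)" using a by (simp add: start_def)
  have "pend ST (Old v, schain a 0 A) = Old (t a)" using A1 by (simp add: pend_chain ST_simp)
  then show ?case using 1 Cons.IH[OF a(4)] by (simp add: S.vp_append)
qed

lemma stretch_last: "concat (map (\<lambda>\<alpha>. schain \<alpha> 0 A) as) \<noteq> [] \<Longrightarrow>
    snd (last (concat (map (\<lambda>\<alpha>. schain \<alpha> 0 A) as))) = A"
proof (induction as)
  case (Cons a as)
  show ?case
  proof (cases "concat (map (\<lambda>\<alpha>. schain \<alpha> 0 A) as) = []")
    case True
    then show ?thesis using A1 by (simp add: last_chain)
  next
    case False
    then show ?thesis using Cons.IH by simp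
  qed
qed simp

lemma theta_zero:
  assumes "\<And>p. g p \<noteq> 0 \<Longrightarrow> stretch_path A p \<noteq> q"
  shows "theta A g q = 0"
proof -
  have "{p. g p \<noteq> 0 \<and> stretch_path A p = q} = {}" using assms by blast
  then show ?thesis unfolding theta_def by (simp only: sum.empty)
qed

lemma theta_New: "theta A g (New \<beta> i, xs) = 0"
  by (rule theta_zero) (simp add: stretch_path_def)

lemma theta_last: "xs \<noteq> [] \<Longrightarrow> snd (last xs) \<noteq> A \<Longrightarrow> theta A g (x, xs) = 0"
  by (rule theta_zero) (metis stretch_eq snd_conv stretch_last)

lemma theta_carrier:
  fixes g :: "'v \<times> 'a list \<Rightarrow> 'k::field"
  assumes g: "g \<in> carrier O.P"
  shows "theta A g \<in> carrier S.P"
proof -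
  have gf: "finite {p. g p \<noteq> 0}" and gv: "\<And>p. g p \<noteq> 0 \<Longrightarrow> O.vp p" using g unfolding O.carrier_P by auto
  have ex: "\<exists>p. g p \<noteq> 0 \<and> stretch_path A p = q" if "theta A g q \<noteq> 0" for q
  proof -
    from that have "(\<Sum>p\<in>{p. g p \<noteq> 0 \<and> stretch_path A p = q}. g p) \<noteq> 0" unfolding theta_def .
    then obtain p where "p \<in> {p. g p \<noteq> 0 \<and> stretch_path A p = q}"
      by (meson sum.not_neutral_contains_not_neutral)
    then show ?thesis by blast
  qed
  have "{q. theta A g q \<noteq> 0} \<subseteq> stretch_path A ` {p. g p \<noteq> 0}"
    using ex by blast
  then have "finite {q. theta A g q \<noteq> 0}" by (rule finite_subset) (rule finite_imageI[OF gf])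
  moreover have "\<forall>q. theta A g q \<noteq> 0 \<longrightarrow> S.vp q"
  proof (intro allI impI)
    fix q assume "theta A g q \<noteq> 0"
    then obtain p where p: "g p \<noteq> 0" "stretch_path A p = q" using ex by blast
    have "O.vp (fst p, snd p)" using gv[OF p(1)] by simp
    then have "S.vp (stretch_path A p)" unfolding stretch_eq by (rule stretch_valid)
    then show "S.vp q" using p(2) by simp
  qed
  ultimately show ?thesis unfolding S.carrier_P by blast
qed

definition Dr :: "'a \<Rightarrow> nat \<Rightarrow> (('v, 'a) svert \<times> ('a \<times> nat) list \<Rightarrow> 'k::field)
    \<Rightarrow> (('v, 'a) svert \<times> ('a \<times> nat) list \<Rightarrow> 'k)" where
  "Dr \<alpha> i f = (\<lambda>p. if fst p = Old (t \<alpha>) then f (New \<alpha> i, schain \<alpha> i A @ snd p) else 0)"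

definition El :: "'a \<Rightarrow> nat \<Rightarrow> (('v, 'a) svert \<times> ('a \<times> nat) list \<Rightarrow> 'k::field)
    \<Rightarrow> (('v, 'a) svert \<times> ('a \<times> nat) list \<Rightarrow> 'k)" where
  "El \<alpha> i f = (\<lambda>p. if pend ST p = Old (s \<alpha>) then f (fst p, snd p @ schain \<alpha> 0 i) else 0)"

lemma pend_take_drop: "pend ST (pend ST (x, take k u), drop k u) = pend ST (x, u)"
  by (simp add: S.pend_append[symmetric])

lemma Dr_mult:
  fixes f g :: "('v, 'a) svert \<times> ('a \<times> nat) list \<Rightarrow> 'k::field"
  assumes j: "1 \<le> j" "j < A"
  shows "Dr \<alpha> j (f \<otimes>\<^bsub>S.P\<^esub> g) = (\<lambda>p. (Dr \<alpha> j f \<otimes>\<^bsub>S.P\<^esub> g) p +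
            (\<Sum>l\<in>{0..<A-j}. f (New \<alpha> j, schain \<alpha> j (j+l)) * Dr \<alpha> (j+l) g p))"
proof
  fix p :: "('v, 'a) svert \<times> ('a \<times> nat) list"
  obtain x u where p: "p = (x, u)" by (cases p)
  show "Dr \<alpha> j (f \<otimes>\<^bsub>S.P\<^esub> g) p = (Dr \<alpha> j f \<otimes>\<^bsub>S.P\<^esub> g) p +
            (\<Sum>l\<in>{0..<A-j}. f (New \<alpha> j, schain \<alpha> j (j+l)) * Dr \<alpha> (j+l) g p)"
  proof (cases "x = Old (t \<alpha>)")
    case False
    then show ?thesis by (simp add: p Dr_def S.mult_P)
  next
    case True
    define m where "m = A - j"
    define q where "q = schain \<alpha> j A"
    have lq: "length q = m" by (simp add: q_def m_def)
    define T where "T k = f (New \<alpha> j, take k (q @ u)) *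
        g (pend ST (New \<alpha> j, take k (q @ u)), drop k (q @ u))" for k
    have "Dr \<alpha> j (f \<otimes>\<^bsub>S.P\<^esub> g) p = (\<Sum>k\<in>{0..<Suc (m + length u)}. T k)"
      unfolding Dr_def S.mult_P p T_def using True lq
      by (simp add: q_def atLeastLessThanSuc_atLeastAtMost)
    also have "\<dots> = (\<Sum>k\<in>{0..<m}. T k) + (\<Sum>k\<in>{m..<Suc (m + length u)}. T k)"
      by (rule sum.atLeastLessThan_concat[symmetric]) auto
    also have "(\<Sum>k\<in>{m..<Suc (m + length u)}. T k) = (\<Sum>i\<in>{0..<Suc (length u)}. T (i + m))"
    proof -
      have "{m..<Suc (m + length u)} = {0 + m..<Suc (length u) + m}" by (simp add: add.commute)
      then show ?thesis using sum.shift_bounds_nat_ivl[of T 0 m "Suc (length u)"] by simp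
    qed
    also have "\<dots> = (Dr \<alpha> j f \<otimes>\<^bsub>S.P\<^esub> g) p"
      unfolding S.mult_P p fst_conv snd_conv atLeastLessThanSuc_atLeastAtMost
    proof (rule sum.cong[OF refl])
      fix i assume i: "i \<in> {0..length u}"
      have 1: "take (i + m) (q @ u) = q @ take i u" using lq by simp
      have 2: "drop (i + m) (q @ u) = drop i u" using lq by simp
      have 3: "pend ST (New \<alpha> j, q) = Old (t \<alpha>)" using j by (simp add: q_def pend_chain ST_simp)
      show "T (i + m) = Dr \<alpha> j f (x, take i u) * g (pend ST (x, take i u), drop i u)"
        unfolding T_def 1 2 using True 3 by (simp add: Dr_def q_def S.pend_append)
    qed
    also have "(\<Sum>k\<in>{0..<m}. T k) = (\<Sum>l\<in>{0..<A-j}. f (New \<alpha> j, schain \<alpha> j (j+l)) * Dr \<alpha> (j+l) g p)"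
      unfolding m_def
    proof (rule sum.cong[OF refl])
      fix k assume k: "k \<in> {0..<A - j}"
      have 1: "take k (q @ u) = schain \<alpha> j (j + k)" using k lq m_def by (simp add: q_def take_chain)
      have 2: "drop k (q @ u) = schain \<alpha> (j + k) A @ u" using k lq m_def by (simp add: q_def drop_chain)
      have 3: "pend ST (New \<alpha> j, schain \<alpha> j (j + k)) = New \<alpha> (j + k)" using k j by (intro pend_chain_New) auto
      show "T k = f (New \<alpha> j, schain \<alpha> j (j + k)) * Dr \<alpha> (j + k) g p"
        unfolding T_def 1 2 3 using True by (simp add: Dr_def p)
    qed
    finally show ?thesis by (simp add: add.commute)
  qed
qed

lemma El_mult:
  fixes f g :: "('v, 'a) svert \<times> ('a \<times> nat) list \<Rightarrow> 'k::field"
  assumes j: "1 \<le> j" "j < A"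
  shows "El \<alpha> j (f \<otimes>\<^bsub>S.P\<^esub> g) = (\<lambda>p. (f \<otimes>\<^bsub>S.P\<^esub> El \<alpha> j g) p +
            (\<Sum>l\<in>{1..<Suc j}. g (New \<alpha> l, schain \<alpha> l j) * El \<alpha> l f p))"
proof
  fix p :: "('v, 'a) svert \<times> ('a \<times> nat) list"
  obtain x u where p: "p = (x, u)" by (cases p)
  show "El \<alpha> j (f \<otimes>\<^bsub>S.P\<^esub> g) p = (f \<otimes>\<^bsub>S.P\<^esub> El \<alpha> j g) p +
            (\<Sum>l\<in>{1..<Suc j}. g (New \<alpha> l, schain \<alpha> l j) * El \<alpha> l f p)"
  proof (cases "pend ST (x, u) = Old (s \<alpha>)")
    case False
    then show ?thesis by (simp add: p El_def S.mult_P pend_take_drop)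
  next
    case True
    define r where "r = schain \<alpha> 0 j"
    have lr: "length r = j" by (simp add: r_def)
    define T where "T k = f (x, take k (u @ r)) *
        g (pend ST (x, take k (u @ r)), drop k (u @ r))" for k
    have "El \<alpha> j (f \<otimes>\<^bsub>S.P\<^esub> g) p = (\<Sum>k\<in>{0..<Suc (length u + j)}. T k)"
      unfolding El_def S.mult_P p T_def using True lr
      by (simp add: r_def atLeastLessThanSuc_atLeastAtMost)
    also have "\<dots> = (\<Sum>k\<in>{0..<Suc (length u)}. T k) + (\<Sum>k\<in>{Suc (length u)..<Suc (length u + j)}. T k)"
      by (rule sum.atLeastLessThan_concat[symmetric]) auto
    also have "(\<Sum>k\<in>{Suc (length u)..<Suc (length u + j)}. T k) = (\<Sum>l\<in>{1..<Suc j}. T (l + length u))"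
    proof -
      have "{Suc (length u)..<Suc (length u + j)} = {1 + length u..<Suc j + length u}" by (simp add: add.commute)
      then show ?thesis using sum.shift_bounds_nat_ivl[of T 1 "length u" "Suc j"] by simp
    qed
    also have "(\<Sum>k\<in>{0..<Suc (length u)}. T k) = (f \<otimes>\<^bsub>S.P\<^esub> El \<alpha> j g) p"
      unfolding S.mult_P p fst_conv snd_conv atLeastLessThanSuc_atLeastAtMost
    proof (rule sum.cong[OF refl])
      fix k assume k: "k \<in> {0..length u}"
      have 1: "take k (u @ r) = take k u" using k by simp
      have 2: "drop k (u @ r) = drop k u @ r" using k by simp
      show "T k = f (x, take k u) * El \<alpha> j g (pend ST (x, take k u), drop k u)"
        unfolding T_def 1 2 using True by (simp add: El_def r_def pend_take_drop)
    qed
    also have "(\<Sum>l\<in>{1..<Suc j}. T (l + length u)) = (\<Sum>l\<in>{1..<Suc j}. g (New \<alpha> l, schain \<alpha> l j) * El \<alpha> l f p)"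
    proof (rule sum.cong[OF refl])
      fix l assume l: "l \<in> {1..<Suc j}"
      have 1: "take (l + length u) (u @ r) = u @ schain \<alpha> 0 l" using l lr by (simp add: r_def take_chain)
      have 2: "drop (l + length u) (u @ r) = schain \<alpha> l j" using l lr by (simp add: r_def drop_chain)
      have 3: "pend ST (x, u @ schain \<alpha> 0 l) = New \<alpha> l"
        using l j True by (simp add: S.pend_append pend_chain ST_simp)
      show "T (l + length u) = g (New \<alpha> l, schain \<alpha> l j) * El \<alpha> l f p"
        unfolding T_def 1 2 3 using True by (simp add: El_def p)
    qed
    finally show ?thesis .
  qed
qed

definition internal :: "(('v, 'a) svert \<times> ('a \<times> nat) list \<Rightarrow> 'k::field) \<Rightarrow> bool" where
  "internal f \<longleftrightarrow> (\<forall>\<alpha> i k. 1 \<le> i \<longrightarrow> i \<le> k \<longrightarrow> k < A \<longrightarrow> f (New \<alpha> i, schain \<alpha> i k) = 0)"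

lemma internal_mult:
  fixes f g :: "('v, 'a) svert \<times> ('a \<times> nat) list \<Rightarrow> 'k::field"
  assumes "internal f \<or> internal g"
  shows "internal (f \<otimes>\<^bsub>S.P\<^esub> g)"
  unfolding internal_def
proof (intro allI impI)
  fix \<alpha> i k assume ik: "1 \<le> i" "i \<le> k" "k < A"
  show "(f \<otimes>\<^bsub>S.P\<^esub> g) (New \<alpha> i, schain \<alpha> i k) = 0"
    unfolding S.mult_P fst_conv snd_conv
  proof (rule sum.neutral, rule ballI)
    fix l assume l: "l \<in> {0..length (schain \<alpha> i k)}"
    have 1: "take l (schain \<alpha> i k) = schain \<alpha> i (i + l)" using l by (simp add: take_chain)
    have 2: "drop l (schain \<alpha> i k) = schain \<alpha> (i + l) k" by (simp add: drop_chain)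
    have 3: "pend ST (New \<alpha> i, schain \<alpha> i (i + l)) = New \<alpha> (i + l)"
      using l ik by (intro pend_chain_New) auto
    have "f (New \<alpha> i, schain \<alpha> i (i + l)) = 0 \<or> g (New \<alpha> (i + l), schain \<alpha> (i + l) k) = 0"
      using assms l ik unfolding internal_def by auto
    then show "f (New \<alpha> i, take l (schain \<alpha> i k)) *
         g (pend ST (New \<alpha> i, take l (schain \<alpha> i k)), drop l (schain \<alpha> i k)) = 0"
      unfolding 1 2 3 by auto
  qed
qed

lemma Dr_carrier:
  fixes f :: "('v, 'a) svert \<times> ('a \<times> nat) list \<Rightarrow> 'k::field"
  assumes f: "f \<in> carrier S.P" and i: "i < A"
  shows "Dr \<alpha> i f \<in> carrier S.P"
proof -
  have ff: "finite {p. f p \<noteq> 0}" and fv: "\<And>p. f p \<noteq> 0 \<Longrightarrow> S.vp p" using f unfolding S.carrier_P by auto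
  have "{p. Dr \<alpha> i f p \<noteq> 0} \<subseteq> (\<lambda>q. (Old (t \<alpha>), drop (A - i) (snd q))) ` {p. f p \<noteq> 0}"
  proof
    fix p assume "p \<in> {p. Dr \<alpha> i f p \<noteq> 0}"
    then have p: "fst p = Old (t \<alpha>)" "f (New \<alpha> i, schain \<alpha> i A @ snd p) \<noteq> 0"
      by (auto simp: Dr_def split: if_splits)
    have "p = (\<lambda>q. (Old (t \<alpha>), drop (A - i) (snd q))) (New \<alpha> i, schain \<alpha> i A @ snd p)"
      using p(1) by (cases p) simp
    then show "p \<in> (\<lambda>q. (Old (t \<alpha>), drop (A - i) (snd q))) ` {p. f p \<noteq> 0}"
      using p(2) by blast
  qed
  then have "finite {p. Dr \<alpha> i f p \<noteq> 0}" by (rule finite_subset) (rule finite_imageI[OF ff])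
  moreover have "\<forall>p. Dr \<alpha> i f p \<noteq> 0 \<longrightarrow> S.vp p"
  proof (intro allI impI)
    fix p assume "Dr \<alpha> i f p \<noteq> 0"
    then have p: "fst p = Old (t \<alpha>)" "f (New \<alpha> i, schain \<alpha> i A @ snd p) \<noteq> 0"
      by (auto simp: Dr_def split: if_splits)
    have "S.vp (New \<alpha> i, schain \<alpha> i A @ snd p)" using fv[OF p(2)] .
    then have "S.vp (pend ST (New \<alpha> i, schain \<alpha> i A), snd p)" by (simp add: S.vp_append)
    then show "S.vp p" using i p(1) by (cases p) (simp add: pend_chain ST_simp)
  qed
  ultimately show ?thesis unfolding S.carrier_P by blast
qed

lemma El_carrier:
  fixes f :: "('v, 'a) svert \<times> ('a \<times> nat) list \<Rightarrow> 'k::field"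
  assumes f: "f \<in> carrier S.P"
  shows "El \<alpha> i f \<in> carrier S.P"
proof -
  have ff: "finite {p. f p \<noteq> 0}" and fv: "\<And>p. f p \<noteq> 0 \<Longrightarrow> S.vp p" using f unfolding S.carrier_P by auto
  have "{p. El \<alpha> i f p \<noteq> 0} \<subseteq> (\<lambda>q. (fst q, take (length (snd q) - i) (snd q))) ` {p. f p \<noteq> 0}"
  proof
    fix p assume "p \<in> {p. El \<alpha> i f p \<noteq> 0}"
    then have p: "f (fst p, snd p @ schain \<alpha> 0 i) \<noteq> 0"
      by (auto simp: El_def split: if_splits)
    have "p = (\<lambda>q. (fst q, take (length (snd q) - i) (snd q))) (fst p, snd p @ schain \<alpha> 0 i)"
      by simp
    then show "p \<in> (\<lambda>q. (fst q, take (length (snd q) - i) (snd q))) ` {p. f p \<noteq> 0}"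
      using p by blast
  qed
  then have "finite {p. El \<alpha> i f p \<noteq> 0}" by (rule finite_subset) (rule finite_imageI[OF ff])
  moreover have "\<forall>p. El \<alpha> i f p \<noteq> 0 \<longrightarrow> S.vp p"
  proof (intro allI impI)
    fix p assume "El \<alpha> i f p \<noteq> 0"
    then have p: "f (fst p, snd p @ schain \<alpha> 0 i) \<noteq> 0"
      by (auto simp: El_def split: if_splits)
    have "S.vp (fst p, snd p @ schain \<alpha> 0 i)" using fv[OF p] .
    then show "S.vp p" by (simp add: S.vp_append)
  qed
  ultimately show ?thesis unfolding S.carrier_P by blast
qed

definition J :: "(('v, 'a) svert \<times> ('a \<times> nat) list \<Rightarrow> 'k::field) set
    \<Rightarrow> (('v, 'a) svert \<times> ('a \<times> nat) list \<Rightarrow> 'k) set" where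
  "J K = {f \<in> K. internal f \<and> (\<forall>\<alpha> i. 1 \<le> i \<longrightarrow> i < A \<longrightarrow> Dr \<alpha> i f \<in> K \<and> El \<alpha> i f \<in> K)}"

lemma J_ideal:
  fixes K :: "(('v, 'a) svert \<times> ('a \<times> nat) list \<Rightarrow> 'k::field) set"
  assumes K: "ideal K S.P"
  shows "ideal (J K) S.P"
proof (rule idealI[OF S.ring_P])
  interpret K: ideal K S.P by (rule K)
  have Kc: "K \<subseteq> carrier S.P" by (rule K.a_subset)
  show "subgroup (J K) (add_monoid S.P)"
  proof (rule group.subgroupI[OF abelian_group.a_group[OF ring.is_abelian_group[OF S.ring_P]]])
    show "J K \<subseteq> carrier (add_monoid S.P)" using Kc unfolding J_def by auto
    have z: "(\<lambda>p. 0) \<in> K" using additive_subgroup.zero_closed[OF ideal.axioms(1)[OF K]]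
      by (simp add: S.zero_P)
    have "\<zero>\<^bsub>S.P\<^esub> \<in> J K"
      unfolding J_def internal_def Dr_def El_def S.zero_P using z
      by (simp add: if_distrib cong: if_cong)
    then show "J K \<noteq> {}" by blast
  next
    fix a assume a: "a \<in> J K"
    then have aK: "a \<in> K" and ai: "internal a"
      and aD: "\<And>\<alpha> i. 1 \<le> i \<Longrightarrow> i < A \<Longrightarrow> Dr \<alpha> i a \<in> K \<and> El \<alpha> i a \<in> K"
      unfolding J_def by auto
    have ac: "a \<in> carrier S.P" using aK Kc by blast
    have eq: "inv\<^bsub>add_monoid S.P\<^esub> a = (\<lambda>p. - a p)"
      using S.a_inv_P[OF ac] by (simp add: a_inv_def)
    have "(\<lambda>p. - a p) \<in> J K"
      unfolding J_def
    proof (intro CollectI conjI allI impI)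
      show "(\<lambda>p. - a p) \<in> K" using additive_subgroup.a_inv_closed[OF ideal.axioms(1)[OF K] aK] S.a_inv_P[OF ac] by simp
      show "internal (\<lambda>p. - a p)" using ai unfolding internal_def by simp
    next
      fix \<alpha> i assume i: "1 \<le> i" "i < A"
      have d: "Dr \<alpha> i (\<lambda>p. - a p) = \<ominus>\<^bsub>S.P\<^esub> (Dr \<alpha> i a)"
        using S.a_inv_P[OF Dr_carrier[OF ac i(2)]] by (simp add: Dr_def fun_eq_iff)
      have e: "El \<alpha> i (\<lambda>p. - a p) = \<ominus>\<^bsub>S.P\<^esub> (El \<alpha> i a)"
        using S.a_inv_P[OF El_carrier[OF ac]] by (simp add: El_def fun_eq_iff)
      show "Dr \<alpha> i (\<lambda>p. - a p) \<in> K" unfolding d using aD[OF i] additive_subgroup.a_inv_closed[OF ideal.axioms(1)[OF K]] by blast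
      show "El \<alpha> i (\<lambda>p. - a p) \<in> K" unfolding e using aD[OF i] additive_subgroup.a_inv_closed[OF ideal.axioms(1)[OF K]] by blast
    qed
    then show "inv\<^bsub>add_monoid S.P\<^esub> a \<in> J K" unfolding eq .
  next
    fix a b assume a: "a \<in> J K" and b: "b \<in> J K"
    have "a \<oplus>\<^bsub>S.P\<^esub> b \<in> J K"
      unfolding J_def
    proof (intro CollectI conjI allI impI)
      show "a \<oplus>\<^bsub>S.P\<^esub> b \<in> K" using a b additive_subgroup.a_closed[OF ideal.axioms(1)[OF K]] unfolding J_def by blast
      show "internal (a \<oplus>\<^bsub>S.P\<^esub> b)" using a b unfolding J_def internal_def S.add_P by simp
    next
      fix \<alpha> i assume i: "1 \<le> i" "i < A"
      have d: "Dr \<alpha> i (a \<oplus>\<^bsub>S.P\<^esub> b) = Dr \<alpha> i a \<oplus>\<^bsub>S.P\<^esub> Dr \<alpha> i b"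
        by (simp add: Dr_def S.add_P fun_eq_iff)
      have e: "El \<alpha> i (a \<oplus>\<^bsub>S.P\<^esub> b) = El \<alpha> i a \<oplus>\<^bsub>S.P\<^esub> El \<alpha> i b"
        by (simp add: El_def S.add_P fun_eq_iff)
      show "Dr \<alpha> i (a \<oplus>\<^bsub>S.P\<^esub> b) \<in> K" unfolding d using a b i additive_subgroup.a_closed[OF ideal.axioms(1)[OF K]] unfolding J_def by blast
      show "El \<alpha> i (a \<oplus>\<^bsub>S.P\<^esub> b) \<in> K" unfolding e using a b i additive_subgroup.a_closed[OF ideal.axioms(1)[OF K]] unfolding J_def by blast
    qed
    then show "a \<otimes>\<^bsub>add_monoid S.P\<^esub> b \<in> J K" by simp
  qed
next
  interpret K: ideal K S.P by (rule K)
  have Kc: "K \<subseteq> carrier S.P" by (rule K.a_subset)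
  fix a x :: "('v, 'a) svert \<times> ('a \<times> nat) list \<Rightarrow> 'k"
  assume a: "a \<in> J K" and x: "x \<in> carrier S.P"
  then have aK: "a \<in> K" and ai: "internal a"
    and aD: "\<And>\<alpha> i. 1 \<le> i \<Longrightarrow> i < A \<Longrightarrow> Dr \<alpha> i a \<in> K \<and> El \<alpha> i a \<in> K"
    unfolding J_def by auto
  show "x \<otimes>\<^bsub>S.P\<^esub> a \<in> J K"
    unfolding J_def
  proof (intro CollectI conjI allI impI)
    show "x \<otimes>\<^bsub>S.P\<^esub> a \<in> K" using K.I_l_closed[OF aK x] .
    show "internal (x \<otimes>\<^bsub>S.P\<^esub> a)" using internal_mult ai by blast
  next
    fix \<alpha> i assume i: "1 \<le> i" "i < A"
    have 1: "Dr \<alpha> i x \<otimes>\<^bsub>S.P\<^esub> a \<in> K" using K.I_l_closed[OF aK Dr_carrier[OF x i(2)]] .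
    have 2: "(\<lambda>p. \<Sum>l\<in>{0..<A-i}. x (New \<alpha> i, schain \<alpha> i (i+l)) * Dr \<alpha> (i+l) a p) \<in> K"
      by (rule S.ideal_lincomb[OF K]) (use aD i in auto)
    have "Dr \<alpha> i (x \<otimes>\<^bsub>S.P\<^esub> a) = (Dr \<alpha> i x \<otimes>\<^bsub>S.P\<^esub> a) \<oplus>\<^bsub>S.P\<^esub>
        (\<lambda>p. \<Sum>l\<in>{0..<A-i}. x (New \<alpha> i, schain \<alpha> i (i+l)) * Dr \<alpha> (i+l) a p)"
      unfolding Dr_mult[OF i] S.add_P ..
    then show "Dr \<alpha> i (x \<otimes>\<^bsub>S.P\<^esub> a) \<in> K" using additive_subgroup.a_closed[OF ideal.axioms(1)[OF K] 1 2] by simp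
    have z: "(\<Sum>l\<in>{1..<Suc i}. a (New \<alpha> l, schain \<alpha> l i) * El \<alpha> l x p) = 0" for p
      using ai i unfolding internal_def by (intro sum.neutral) auto
    have "El \<alpha> i (x \<otimes>\<^bsub>S.P\<^esub> a) = x \<otimes>\<^bsub>S.P\<^esub> El \<alpha> i a"
      unfolding El_mult[OF i] z by simp
    then show "El \<alpha> i (x \<otimes>\<^bsub>S.P\<^esub> a) \<in> K" using K.I_l_closed[OF _ x] aD[OF i] by simp
  qed
next
  interpret K: ideal K S.P by (rule K)
  have Kc: "K \<subseteq> carrier S.P" by (rule K.a_subset)
  fix a x :: "('v, 'a) svert \<times> ('a \<times> nat) list \<Rightarrow> 'k"
  assume a: "a \<in> J K" and x: "x \<in> carrier S.P"
  then have aK: "a \<in> K" and ai: "internal a"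
    and aD: "\<And>\<alpha> i. 1 \<le> i \<Longrightarrow> i < A \<Longrightarrow> Dr \<alpha> i a \<in> K \<and> El \<alpha> i a \<in> K"
    unfolding J_def by auto
  show "a \<otimes>\<^bsub>S.P\<^esub> x \<in> J K"
    unfolding J_def
  proof (intro CollectI conjI allI impI)
    show "a \<otimes>\<^bsub>S.P\<^esub> x \<in> K" using K.I_r_closed[OF aK x] .
    show "internal (a \<otimes>\<^bsub>S.P\<^esub> x)" using internal_mult ai by blast
  next
    fix \<alpha> i assume i: "1 \<le> i" "i < A"
    have z: "(\<Sum>l\<in>{0..<A-i}. a (New \<alpha> i, schain \<alpha> i (i+l)) * Dr \<alpha> (i+l) x p) = 0" for p
      using ai i unfolding internal_def by (intro sum.neutral) auto
    have "Dr \<alpha> i (a \<otimes>\<^bsub>S.P\<^esub> x) = Dr \<alpha> i a \<otimes>\<^bsub>S.P\<^esub> x"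
      unfolding Dr_mult[OF i] z by simp
    then show "Dr \<alpha> i (a \<otimes>\<^bsub>S.P\<^esub> x) \<in> K" using K.I_r_closed[OF _ x] aD[OF i] by simp
    have 1: "a \<otimes>\<^bsub>S.P\<^esub> El \<alpha> i x \<in> K" using K.I_r_closed[OF aK El_carrier[OF x]] .
    have 2: "(\<lambda>p. \<Sum>l\<in>{1..<Suc i}. x (New \<alpha> l, schain \<alpha> l i) * El \<alpha> l a p) \<in> K"
      by (rule S.ideal_lincomb[OF K]) (use aD i in auto)
    have "El \<alpha> i (a \<otimes>\<^bsub>S.P\<^esub> x) = (a \<otimes>\<^bsub>S.P\<^esub> El \<alpha> i x) \<oplus>\<^bsub>S.P\<^esub>
        (\<lambda>p. \<Sum>l\<in>{1..<Suc i}. x (New \<alpha> l, schain \<alpha> l i) * El \<alpha> l a p)"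
      unfolding El_mult[OF i] S.add_P ..
    then show "El \<alpha> i (a \<otimes>\<^bsub>S.P\<^esub> x) \<in> K" using additive_subgroup.a_closed[OF ideal.axioms(1)[OF K] 1 2] by simp
  qed
qed

end


lemma (in ring) diff_zero_eq: "x \<in> carrier R \<Longrightarrow> y \<in> carrier R \<Longrightarrow> x \<ominus> y = \<zero> \<Longrightarrow> x = y"
  by (metis a_minus_def add.inv_solve_right l_zero minus_closed zero_closed r_neg1 a_comm)

lemma right_iso_abs:
  fixes L (structure)
  assumes L: "ring L" and q: "q \<in> carrier L" and e: "e \<in> carrier L" and qe: "q \<otimes> e = q"
    and key: "\<And>z. z \<in> carrier L \<Longrightarrow> q \<otimes> (e \<otimes> z) = \<zero> \<Longrightarrow> e \<otimes> z = \<zero>"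
    and S: "S \<subseteq> carrier L"
  shows "right_mod_iso L S {e \<otimes> b | b. b \<in> S} {q \<otimes> b | b. b \<in> S}"
proof -
  interpret ring L by (rule L)
  have M: "{e \<otimes> b | b. b \<in> S} \<subseteq> carrier L" using S e by auto
  have "bij_betw (\<lambda>x. q \<otimes> x) {e \<otimes> b | b. b \<in> S} {q \<otimes> b | b. b \<in> S}"
    unfolding bij_betw_def
  proof
    show "inj_on (\<lambda>x. q \<otimes> x) {e \<otimes> b | b. b \<in> S}"
    proof (rule inj_onI)
      fix x y assume "x \<in> {e \<otimes> b | b. b \<in> S}" "y \<in> {e \<otimes> b | b. b \<in> S}" and xy: "q \<otimes> x = q \<otimes> y"
      then obtain b1 b2 where b: "b1 \<in> S" "b2 \<in> S" "x = e \<otimes> b1" "y = e \<otimes> b2" by blast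
      have b1: "b1 \<in> carrier L" and b2: "b2 \<in> carrier L" using b S by auto
      have "q \<otimes> (e \<otimes> (b1 \<ominus> b2)) = q \<otimes> x \<ominus> q \<otimes> y"
        using b1 b2 q e by (simp add: b a_minus_def r_distr r_minus m_assoc)
      also have "\<dots> = \<zero>" using xy q b1 b2 e b by (simp add: r_neg a_minus_def)
      finally have "e \<otimes> (b1 \<ominus> b2) = \<zero>" using key b1 b2 by simp
      then have "x \<ominus> y = \<zero>" using b1 b2 e by (simp add: b a_minus_def r_distr r_minus)
      then show "x = y" using diff_zero_eq b1 b2 e b by simp
    qed
    show "(\<lambda>x. q \<otimes> x) ` {e \<otimes> b | b. b \<in> S} = {q \<otimes> b | b. b \<in> S}"
    proof -
      have "q \<otimes> (e \<otimes> b) = q \<otimes> b" if "b \<in> S" for b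
        using that S q e qe by (simp add: m_assoc[symmetric] subsetD)
      then show ?thesis by (auto simp: image_iff) (metis)
    qed
  qed
  moreover have "\<forall>x\<in>{e \<otimes> b | b. b \<in> S}. \<forall>y\<in>{e \<otimes> b | b. b \<in> S}. q \<otimes> (x \<oplus> y) = q \<otimes> x \<oplus> q \<otimes> y"
    using M q by (simp add: r_distr subsetD)
  moreover have "\<forall>x\<in>{e \<otimes> b | b. b \<in> S}. \<forall>b\<in>S. q \<otimes> (x \<otimes> b) = q \<otimes> x \<otimes> b"
    using M q S by (simp add: m_assoc subsetD)
  ultimately show ?thesis unfolding right_mod_iso_def by blast
qed

lemma left_iso_abs:
  fixes L (structure)
  assumes L: "ring L" and p: "p \<in> carrier L" and e: "e \<in> carrier L" and ep: "e \<otimes> p = p"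
    and key: "\<And>z. z \<in> carrier L \<Longrightarrow> (z \<otimes> e) \<otimes> p = \<zero> \<Longrightarrow> z \<otimes> e = \<zero>"
    and S: "S \<subseteq> carrier L"
  shows "left_mod_iso L S {b \<otimes> e | b. b \<in> S} {b \<otimes> p | b. b \<in> S}"
proof -
  interpret ring L by (rule L)
  have M: "{b \<otimes> e | b. b \<in> S} \<subseteq> carrier L" using S e by auto
  have "bij_betw (\<lambda>x. x \<otimes> p) {b \<otimes> e | b. b \<in> S} {b \<otimes> p | b. b \<in> S}"
    unfolding bij_betw_def
  proof
    show "inj_on (\<lambda>x. x \<otimes> p) {b \<otimes> e | b. b \<in> S}"
    proof (rule inj_onI)
      fix x y assume "x \<in> {b \<otimes> e | b. b \<in> S}" "y \<in> {b \<otimes> e | b. b \<in> S}" and xy: "x \<otimes> p = y \<otimes> p"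
      then obtain b1 b2 where b: "b1 \<in> S" "b2 \<in> S" "x = b1 \<otimes> e" "y = b2 \<otimes> e" by blast
      have b1: "b1 \<in> carrier L" and b2: "b2 \<in> carrier L" using b S by auto
      have "((b1 \<ominus> b2) \<otimes> e) \<otimes> p = x \<otimes> p \<ominus> y \<otimes> p"
        using b1 b2 p e by (simp add: b a_minus_def l_distr l_minus m_assoc)
      also have "\<dots> = \<zero>" using xy p b1 b2 e b by (simp add: r_neg a_minus_def)
      finally have "(b1 \<ominus> b2) \<otimes> e = \<zero>" using key b1 b2 by simp
      then have "x \<ominus> y = \<zero>" using b1 b2 e by (simp add: b a_minus_def l_distr l_minus)
      then show "x = y" using diff_zero_eq b1 b2 e b by simp
    qed
    show "(\<lambda>x. x \<otimes> p) ` {b \<otimes> e | b. b \<in> S} = {b \<otimes> p | b. b \<in> S}"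
    proof -
      have "(b \<otimes> e) \<otimes> p = b \<otimes> p" if "b \<in> S" for b
        using that S p e ep by (simp add: m_assoc subsetD)
      then show ?thesis by (auto simp: image_iff) (metis)
    qed
  qed
  moreover have "\<forall>x\<in>{b \<otimes> e | b. b \<in> S}. \<forall>y\<in>{b \<otimes> e | b. b \<in> S}. (x \<oplus> y) \<otimes> p = x \<otimes> p \<oplus> y \<otimes> p"
    using M p by (simp add: l_distr subsetD)
  moreover have "\<forall>x\<in>{b \<otimes> e | b. b \<in> S}. \<forall>b\<in>S. (b \<otimes> x) \<otimes> p = b \<otimes> (x \<otimes> p)"
    using M p S by (simp add: m_assoc subsetD)
  ultimately show ?thesis unfolding left_mod_iso_def by blast
qed


context stretch
begin

lemma Dr_pbasis:
  assumes j: "1 \<le> j" "j < A"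
  shows "Dr \<alpha> j (pbasis (New \<alpha> j, schain \<alpha> j A) :: _ \<Rightarrow> 'k::field) = pbasis (Old (t \<alpha>), [])"
proof
  fix p :: "('v, 'a) svert \<times> ('a \<times> nat) list"
  show "Dr \<alpha> j (pbasis (New \<alpha> j, schain \<alpha> j A) :: _ \<Rightarrow> 'k::field) p = pbasis (Old (t \<alpha>), []) p"
    by (cases p) (auto simp: Dr_def pbasis_def)
qed

lemma Dr_qb:
  fixes y :: "('v, 'a) svert \<times> ('a \<times> nat) list \<Rightarrow> 'k::field"
  assumes j: "1 \<le> j" "j < A"
  shows "Dr \<alpha> j (pbasis (New \<alpha> j, schain \<alpha> j A) \<otimes>\<^bsub>S.P\<^esub> y) = pbasis (Old (t \<alpha>), []) \<otimes>\<^bsub>S.P\<^esub> y"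
proof -
  have z: "(\<Sum>l\<in>{0..<A-j}. (pbasis (New \<alpha> j, schain \<alpha> j A) :: _ \<Rightarrow> 'k) (New \<alpha> j, schain \<alpha> j (j+l)) * Dr \<alpha> (j+l) y p) = 0" for p
  proof (rule sum.neutral, rule ballI)
    fix l assume "l \<in> {0..<A-j}"
    then have "schain \<alpha> j (j+l) \<noteq> schain \<alpha> j A"
      by (metis add_diff_cancel_left' atLeastLessThan_iff length_chain less_irrefl_nat)
    then show "(pbasis (New \<alpha> j, schain \<alpha> j A) :: _ \<Rightarrow> 'k) (New \<alpha> j, schain \<alpha> j (j+l)) * Dr \<alpha> (j+l) y p = 0"
      by (simp add: pbasis_def)
  qed
  show ?thesis unfolding Dr_mult[OF j] z Dr_pbasis[OF j] by simp
qed

lemma El_pbasis: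
  shows "El \<alpha> j (pbasis (Old (s \<alpha>), schain \<alpha> 0 j) :: _ \<Rightarrow> 'k::field) = pbasis (Old (s \<alpha>), [])"
proof
  fix p :: "('v, 'a) svert \<times> ('a \<times> nat) list"
  show "El \<alpha> j (pbasis (Old (s \<alpha>), schain \<alpha> 0 j) :: _ \<Rightarrow> 'k::field) p = pbasis (Old (s \<alpha>), []) p"
    by (cases p) (auto simp: El_def pbasis_def)
qed

lemma El_pb:
  fixes y :: "('v, 'a) svert \<times> ('a \<times> nat) list \<Rightarrow> 'k::field"
  assumes j: "1 \<le> j" "j < A"
  shows "El \<alpha> j (y \<otimes>\<^bsub>S.P\<^esub> pbasis (Old (s \<alpha>), schain \<alpha> 0 j)) = y \<otimes>\<^bsub>S.P\<^esub> pbasis (Old (s \<alpha>), [])"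
proof -
  have z: "(\<Sum>l\<in>{1..<Suc j}. (pbasis (Old (s \<alpha>), schain \<alpha> 0 j) :: _ \<Rightarrow> 'k) (New \<alpha> l, schain \<alpha> l j) * El \<alpha> l y p) = 0" for p
    by (rule sum.neutral) (simp add: pbasis_def)
  show ?thesis unfolding El_mult[OF j] z El_pbasis by simp
qed

lemma theta_J:
  fixes G :: "('v \<times> 'a list \<Rightarrow> 'k::field) set"
  assumes Gc: "theta A ` G \<subseteq> carrier S.P" and g: "g \<in> G"
  shows "theta A g \<in> J (genideal S.P (theta A ` G))"
proof -
  let ?K = "genideal S.P (theta A ` G)"
  have idK: "ideal ?K S.P" by (rule ring.genideal_ideal[OF S.ring_P Gc])
  have z: "(\<lambda>p. 0) \<in> ?K" using additive_subgroup.zero_closed[OF ideal.axioms(1)[OF idK]]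
    by (simp add: S.zero_P)
  have "theta A g \<in> ?K" using ring.genideal_self[OF S.ring_P Gc] g by blast
  moreover have "internal (theta A g)" unfolding internal_def by (simp add: theta_New)
  moreover have "Dr \<alpha> i (theta A g) = (\<lambda>p. 0)" for \<alpha> i
    by (simp add: Dr_def theta_New fun_eq_iff)
  moreover have "El \<alpha> i (theta A g) = (\<lambda>p. 0)" if "1 \<le> i" "i < A" for \<alpha> i
  proof
    fix p :: "('v, 'a) svert \<times> ('a \<times> nat) list"
    have "snd p @ schain \<alpha> 0 i \<noteq> []" using that by (simp add: chain_Nil_iff)
    moreover have "snd (last (snd p @ schain \<alpha> 0 i)) \<noteq> A" using that by (simp add: last_chain chain_Nil_iff)
    ultimately show "El \<alpha> i (theta A g) p = 0" by (simp add: El_def theta_last)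
  qed
  ultimately show ?thesis unfolding J_def using z by simp
qed

lemma genideal_J:
  fixes G :: "('v \<times> 'a list \<Rightarrow> 'k::field) set"
  assumes Gc: "theta A ` G \<subseteq> carrier S.P"
  shows "genideal S.P (theta A ` G) \<subseteq> J (genideal S.P (theta A ` G))"
proof (rule ring.genideal_minimal[OF S.ring_P])
  show "ideal (J (genideal S.P (theta A ` G))) S.P"
    by (rule J_ideal[OF ring.genideal_ideal[OF S.ring_P Gc]])
  show "theta A ` G \<subseteq> J (genideal S.P (theta A ` G))" using theta_J[OF Gc] by blast
qed

end



context stretch
begin

lemma main:
  fixes G :: "('v \<times> 'a list \<Rightarrow> 'k::field) set" and w :: "('v, 'a) svert"
  assumes Gc: "\<forall>g\<in>G. g \<in> carrier O.P" and w: "w \<in> SV" "w \<notin> Old ` V"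
  shows "let L = sLam A V E s t G;
             cl = scls A V E s t G;
             \<epsilon> = finsum L (\<lambda>u. cl (Old u, [])) V;
             B = {monoid.mult L (monoid.mult L \<epsilon> x) \<epsilon> | x. x \<in> carrier L};
             pw = cl (pw_path A s w);
             qw = cl (qw_path A w);
             v = cl (fst (pw_path A s w), []);
             v' = cl (pend (st A t) (qw_path A w), [])
         in right_mod_iso L B {monoid.mult L v' b | b. b \<in> B} {monoid.mult L qw b | b. b \<in> B}
          \<and> right_mod_iso L (carrier L) {monoid.mult L v' x | x. x \<in> carrier L}
                                        {monoid.mult L qw x | x. x \<in> carrier L}
          \<and> left_mod_iso L B {monoid.mult L b v | b. b \<in> B} {monoid.mult L b pw | b. b \<in> B}
          \<and> left_mod_iso L (carrier L) {monoid.mult L x v | x. x \<in> carrier L}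
                                       {monoid.mult L x pw | x. x \<in> carrier L}"
proof -
  obtain \<alpha> j where wj: "w = New \<alpha> j" and \<alpha>: "\<alpha> \<in> E" and j: "1 \<le> j" "j < A"
    using w A1 unfolding sV_def by auto
  have R_eq: "sR A V E s t = S.P" by (simp add: sR_def)
  define I where "I = sI A V E s t G"
  have I_eq: "I = genideal S.P (theta A ` G)" by (simp add: I_def sI_def R_eq)
  have Tc: "theta A ` G \<subseteq> carrier S.P" using Gc theta_carrier by blast
  have idI: "ideal I S.P" unfolding I_eq by (rule ring.genideal_ideal[OF S.ring_P Tc])
  have IJ: "I \<subseteq> J I" unfolding I_eq by (rule genideal_J[OF Tc])
  define L where "L = sLam A V E s t G"
  have L_eq: "L = S.P Quot I" by (simp add: L_def sLam_def R_eq I_def)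
  have ringL: "ring L" unfolding L_eq by (rule ideal.quotient_is_ring[OF idI])
  define h where "h = a_r_coset S.P I"
  have hom: "h \<in> ring_hom S.P L" unfolding h_def L_eq by (rule ideal.rcos_ring_hom[OF idI])
  have cl_eq: "scls A V E s t G p = h (pbasis p)" for p by (simp add: scls_def h_def R_eq I_def)
  have carrL: "carrier L = h ` carrier S.P"
    unfolding L_eq h_def FactRing_def A_RCOSETS_def RCOSETS_def a_r_coset_def by auto
  have zeroL: "\<zero>\<^bsub>L\<^esub> = I" unfolding L_eq by (simp add: FactRing_def)
  have hmult: "h (x \<otimes>\<^bsub>S.P\<^esub> y) = h x \<otimes>\<^bsub>L\<^esub> h y" if "x \<in> carrier S.P" "y \<in> carrier S.P" for x y
    using ring_hom_mult[OF hom that] .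
  have hzero: "h x = \<zero>\<^bsub>L\<^esub> \<longleftrightarrow> x \<in> I" if "x \<in> carrier S.P" for x
    using ideal.rcos_const_imp_mem[OF idI that] ring.a_rcos_zero[OF S.ring_P idI]
    unfolding zeroL h_def by blast
  have hc: "h x \<in> carrier L" if "x \<in> carrier S.P" for x using carrL that by blast
  have Ic: "I \<subseteq> carrier S.P" using ideal.Icarr[OF idI] by blast
  have iJ: "x \<in> I \<Longrightarrow> Dr \<alpha> j x \<in> I \<and> El \<alpha> j x \<in> I" for x using IJ j unfolding J_def by blast

  define qb :: "('v, 'a) svert \<times> ('a \<times> nat) list \<Rightarrow> 'k" where "qb = pbasis (New \<alpha> j, schain \<alpha> j A)"
  define vb :: "('v, 'a) svert \<times> ('a \<times> nat) list \<Rightarrow> 'k" where "vb = pbasis (Old (t \<alpha>), [])"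
  define pb :: "('v, 'a) svert \<times> ('a \<times> nat) list \<Rightarrow> 'k" where "pb = pbasis (Old (s \<alpha>), schain \<alpha> 0 j)"
  define sb :: "('v, 'a) svert \<times> ('a \<times> nat) list \<Rightarrow> 'k" where "sb = pbasis (Old (s \<alpha>), [])"
  have qw_eq: "qw_path A w = (New \<alpha> j, schain \<alpha> j A)" by (simp add: qw_path_def wj schain_def)
  have pw_eq: "pw_path A s w = (Old (s \<alpha>), schain \<alpha> 0 j)" by (simp add: pw_path_def wj schain_def)
  have pend_qw: "pend ST (New \<alpha> j, schain \<alpha> j A) = Old (t \<alpha>)" using j by (simp add: pend_chain ST_simp)
  have qbc: "qb \<in> carrier S.P" unfolding qb_def
    using chain_valid[OF \<alpha> j(2), of A] j by (intro S.pbasis_carrier) (simp add: start_def)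
  have pbc: "pb \<in> carrier S.P" unfolding pb_def
    using chain_valid[OF \<alpha>, of 0 j] j by (intro S.pbasis_carrier) (simp add: start_def)
  have "Old (t \<alpha>) \<in> SV" "Old (s \<alpha>) \<in> SV" using \<alpha> tE sE by (auto simp: sV_def)
  then have vbc: "vb \<in> carrier S.P" and sbc: "sb \<in> carrier S.P"
    unfolding vb_def sb_def by (auto intro!: S.pbasis_carrier)
  have qv: "qb \<otimes>\<^bsub>S.P\<^esub> vb = qb"
    unfolding vb_def S.mult_pbasis_right by (auto simp: qb_def pbasis_def pend_qw fun_eq_iff)
  have vv: "vb \<otimes>\<^bsub>S.P\<^esub> vb = vb"
    unfolding vb_def S.mult_pbasis_right by (auto simp: pbasis_def fun_eq_iff)
  have sp: "sb \<otimes>\<^bsub>S.P\<^esub> pb = pb"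
    unfolding sb_def S.mult_pbasis_left by (auto simp: pb_def pbasis_def fun_eq_iff)
  have ss: "sb \<otimes>\<^bsub>S.P\<^esub> sb = sb"
    unfolding sb_def S.mult_pbasis_left by (auto simp: pbasis_def fun_eq_iff)

  define qw where "qw = h qb"
  define v' where "v' = h vb"
  define pw where "pw = h pb"
  define v where "v = h sb"
  have qwc: "qw \<in> carrier L" and v'c: "v' \<in> carrier L" and pwc: "pw \<in> carrier L" and vc: "v \<in> carrier L"
    using hc qbc vbc pbc sbc by (auto simp: qw_def v'_def pw_def v_def)
  have qwv': "qw \<otimes>\<^bsub>L\<^esub> v' = qw" unfolding qw_def v'_def using hmult[OF qbc vbc] qv by simp
  have vpw: "v \<otimes>\<^bsub>L\<^esub> pw = pw" unfolding pw_def v_def using hmult[OF sbc pbc] sp by simp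
  have keyR: "v' \<otimes>\<^bsub>L\<^esub> z = \<zero>\<^bsub>L\<^esub>" if z: "z \<in> carrier L" and e: "qw \<otimes>\<^bsub>L\<^esub> (v' \<otimes>\<^bsub>L\<^esub> z) = \<zero>\<^bsub>L\<^esub>" for z
  proof -
    obtain z0 where z0: "z0 \<in> carrier S.P" "z = h z0" using z carrL by blast
    have c1: "vb \<otimes>\<^bsub>S.P\<^esub> z0 \<in> carrier S.P" using S.mult_closed_P vbc z0 by blast
    have c2: "qb \<otimes>\<^bsub>S.P\<^esub> (vb \<otimes>\<^bsub>S.P\<^esub> z0) \<in> carrier S.P" using S.mult_closed_P qbc c1 by blast
    have "h (qb \<otimes>\<^bsub>S.P\<^esub> (vb \<otimes>\<^bsub>S.P\<^esub> z0)) = \<zero>\<^bsub>L\<^esub>"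
      using e unfolding z0 qw_def v'_def hmult[OF vbc z0(1)] hmult[OF qbc c1] .
    then have "qb \<otimes>\<^bsub>S.P\<^esub> (vb \<otimes>\<^bsub>S.P\<^esub> z0) \<in> I" using hzero c2 by blast
    then have "Dr \<alpha> j (qb \<otimes>\<^bsub>S.P\<^esub> (vb \<otimes>\<^bsub>S.P\<^esub> z0)) \<in> I" using iJ by blast
    then have "vb \<otimes>\<^bsub>S.P\<^esub> (vb \<otimes>\<^bsub>S.P\<^esub> z0) \<in> I" unfolding qb_def Dr_qb[OF j] vb_def .
    then have "vb \<otimes>\<^bsub>S.P\<^esub> z0 \<in> I" using S.assoc_P[of vb vb z0] vv by simp
    then have "h (vb \<otimes>\<^bsub>S.P\<^esub> z0) = \<zero>\<^bsub>L\<^esub>" using hzero c1 by blast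
    then show ?thesis unfolding z0 v'_def hmult[OF vbc z0(1)] .
  qed
  have keyL: "z \<otimes>\<^bsub>L\<^esub> v = \<zero>\<^bsub>L\<^esub>" if z: "z \<in> carrier L" and e: "(z \<otimes>\<^bsub>L\<^esub> v) \<otimes>\<^bsub>L\<^esub> pw = \<zero>\<^bsub>L\<^esub>" for z
  proof -
    obtain z0 where z0: "z0 \<in> carrier S.P" "z = h z0" using z carrL by blast
    have c1: "z0 \<otimes>\<^bsub>S.P\<^esub> sb \<in> carrier S.P" using S.mult_closed_P sbc z0 by blast
    have c2: "(z0 \<otimes>\<^bsub>S.P\<^esub> sb) \<otimes>\<^bsub>S.P\<^esub> pb \<in> carrier S.P" using S.mult_closed_P pbc c1 by blast
    have "h ((z0 \<otimes>\<^bsub>S.P\<^esub> sb) \<otimes>\<^bsub>S.P\<^esub> pb) = \<zero>\<^bsub>L\<^esub>"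
      using e unfolding z0 pw_def v_def hmult[OF z0(1) sbc] hmult[OF c1 pbc] .
    then have "(z0 \<otimes>\<^bsub>S.P\<^esub> sb) \<otimes>\<^bsub>S.P\<^esub> pb \<in> I" using hzero c2 by blast
    then have "El \<alpha> j ((z0 \<otimes>\<^bsub>S.P\<^esub> sb) \<otimes>\<^bsub>S.P\<^esub> pb) \<in> I" using iJ by blast
    then have "(z0 \<otimes>\<^bsub>S.P\<^esub> sb) \<otimes>\<^bsub>S.P\<^esub> sb \<in> I" unfolding pb_def El_pb[OF j] sb_def .
    then have "z0 \<otimes>\<^bsub>S.P\<^esub> sb \<in> I" using S.assoc_P[of z0 sb sb] ss by simp
    then have "h (z0 \<otimes>\<^bsub>S.P\<^esub> sb) = \<zero>\<^bsub>L\<^esub>" using hzero c1 by blast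
    then show ?thesis unfolding z0 v_def hmult[OF z0(1) sbc] .
  qed
  define \<epsilon> where "\<epsilon> = finsum L (\<lambda>u. scls A V E s t G (Old u, [])) V"
  have epsc: "\<epsilon> \<in> carrier L"
    unfolding \<epsilon>_def
  proof (rule abelian_monoid.finsum_closed[OF abelian_group.axioms(1)[OF ring.is_abelian_group[OF ringL]]])
    show "(\<lambda>u. scls A V E s t G (Old u, [])) \<in> V \<rightarrow> carrier L"
    proof
      fix u assume "u \<in> V"
      then have "Old u \<in> SV" by (simp add: sV_def)
      then have "(pbasis (Old u, []) :: _ \<Rightarrow> 'k) \<in> carrier S.P" by (intro S.pbasis_carrier) simp
      then show "scls A V E s t G (Old u, []) \<in> carrier L" unfolding cl_eq by (rule hc)
    qed
  qed
  define B where "B = {monoid.mult L (monoid.mult L \<epsilon> x) \<epsilon> | x. x \<in> carrier L}"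
  have Bc: "B \<subseteq> carrier L" unfolding B_def using epsc ring.ring_simprules(5)[OF ringL] by blast
  have e1: "scls A V E s t G (pw_path A s w) = pw" by (simp add: cl_eq pw_eq pw_def pb_def)
  have e2: "scls A V E s t G (qw_path A w) = qw" by (simp add: cl_eq qw_eq qw_def qb_def)
  have e3: "scls A V E s t G (fst (pw_path A s w), []) = v" by (simp add: cl_eq pw_eq v_def sb_def)
  have e4: "scls A V E s t G (pend (st A t) (qw_path A w), []) = v'"
    by (simp add: cl_eq qw_eq pend_qw v'_def vb_def)
  show ?thesis
    unfolding Let_def e1 e2 e3 e4 L_def[symmetric] \<epsilon>_def[symmetric] B_def[symmetric]
    using right_iso_abs[OF ringL qwc v'c qwv' keyR Bc]
      right_iso_abs[OF ringL qwc v'c qwv' keyR order_refl]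
      left_iso_abs[OF ringL pwc vc vpw keyL Bc]
      left_iso_abs[OF ringL pwc vc vpw keyL order_refl]
    by blast
qed

end


theorem proposition1p11:
  fixes V :: "'v set" and E :: "'a set" and s t :: "'a \<Rightarrow> 'v"
    and I G :: "('v \<times> 'a list \<Rightarrow> 'k::field) set"
    and A :: nat and w :: "('v, 'a) svert"
  assumes "finite V" and "finite E" and "s ` E \<subseteq> V" and "t ` E \<subseteq> V"
    and "admissible V E s t I"
    and "finite G" and "\<forall>g\<in>G. uniform V E s t g"
    and "genideal (path_alg V E s t) G = I"
    and "\<forall>H. H \<subset> G \<longrightarrow> genideal (path_alg V E s t) H \<noteq> I"
    and "1 \<le> A"
    and "w \<in> sV A V E" and "w \<notin> Old ` V"
  shows "let L = sLam A V E s t G;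
             cl = scls A V E s t G;
             \<epsilon> = finsum L (\<lambda>u. cl (Old u, [])) V;
             B = {monoid.mult L (monoid.mult L \<epsilon> x) \<epsilon> | x. x \<in> carrier L};
             pw = cl (pw_path A s w);
             qw = cl (qw_path A w);
             v = cl (fst (pw_path A s w), []);
             v' = cl (pend (st A t) (qw_path A w), [])
         in right_mod_iso L B {monoid.mult L v' b | b. b \<in> B} {monoid.mult L qw b | b. b \<in> B}
          \<and> right_mod_iso L (carrier L) {monoid.mult L v' x | x. x \<in> carrier L}
                                        {monoid.mult L qw x | x. x \<in> carrier L}
          \<and> left_mod_iso L B {monoid.mult L b v | b. b \<in> B} {monoid.mult L b pw | b. b \<in> B}
          \<and> left_mod_iso L (carrier L) {monoid.mult L x v | x. x \<in> carrier L}
                                       {monoid.mult L x pw | x. x \<in> carrier L}"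
proof -
  interpret stretch V E s t A
    by (rule stretch.intro) (use assms in auto)
  have Gc: "\<forall>g\<in>G. g \<in> carrier O.P" using assms(7) unfolding uniform_def by blast
  show ?thesis by (rule main[OF Gc assms(11) assms(12)])
qed

end
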